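(* The functor $\alpha\colon\mathrm{EMD}\to\mathrm{Ab}$, $(A,B,\phi,\psi)\mapsto A$, is full and essentially surjective, and reflects isomorphisms. For any $M,M'\in\mathrm{EMD}$ there is a natural short exact sequence \[ 0\to\mathrm{Hom}(\alpha(M)[2],\alpha(M')/2)\to\mathrm{EMD}(M,M')\xrightarrow{\alpha}\mathrm{Hom}(\alpha(M),\alpha(M'))\to0. \]
   Context: For an abelian group $U$, $U[2]=\{u:2u=0\}$ and $U/2=U/2U$. A Moore diagram is $(A,B,\phi,\psi)$ with abelian groups $A,B$, $\phi\colon A\to B$, $\psi\colon B\to A$, $\psi\phi=0$, $\phi\psi=2\cdot1_B$; morphisms are pairs $(f\colon A\to A',g\colon B\to B')$ with $g\phi=\phi'f$, $f\psi=\psi'g$. It is exact if the induced sequence $A/2\xrightarrow{\phi}B\xrightarrow{\psi}A[2]$ is short exact; $\mathrm{EMD}$ is the category of exact Moore diagrams, and $\alpha$ sends $(f,g)$ to $f$. *)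

theory Defs
  imports "HOL-Algebra.Algebra"
begin

(* Abelian groups are HOL-Algebra groups G :: 'a monoid with comm_group G,
   written multiplicatively: "2u" is u \<otimes> u, "0" is \<one>.
   Homomorphisms are taken extensional (undefined off the carrier), so that
   equality of homomorphisms is equality on the carrier. *)

definition hom_ext :: "'a monoid \<Rightarrow> 'b monoid \<Rightarrow> ('a \<Rightarrow> 'b) set" where
  "hom_ext G H = hom G H \<inter> extensional (carrier G)"

definition hom_group :: "'a monoid \<Rightarrow> 'b monoid \<Rightarrow> ('a \<Rightarrow> 'b) monoid" where
  "hom_group G H = \<lparr>carrier = hom_ext G H,
     monoid.mult = (\<lambda>f g. \<lambda>x\<in>carrier G. f x \<otimes>\<^bsub>H\<^esub> g x),
     monoid.one = (\<lambda>x\<in>carrier G. \<one>\<^bsub>H\<^esub>)\<rparr>"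

definition tors2 :: "'a monoid \<Rightarrow> 'a set" where
  "tors2 G = {x \<in> carrier G. x \<otimes>\<^bsub>G\<^esub> x = \<one>\<^bsub>G\<^esub>}"

definition twoG :: "'a monoid \<Rightarrow> 'a set" where
  "twoG G = {x \<otimes>\<^bsub>G\<^esub> x | x. x \<in> carrier G}"

definition tors2_grp :: "'a monoid \<Rightarrow> 'a monoid" where
  "tors2_grp G = subgroup_generated G (tors2 G)"

definition mod2 :: "'a monoid \<Rightarrow> 'a set monoid" where
  "mod2 G = G Mod (twoG G)"

definition mod2_map :: "'a monoid \<Rightarrow> 'b monoid \<Rightarrow> ('a \<Rightarrow> 'b) \<Rightarrow> 'a set \<Rightarrow> 'b set" where
  "mod2_map G H f = (\<lambda>C\<in>carrier (mod2 G). twoG H #>\<^bsub>H\<^esub> f (SOME a. a \<in> C))"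

type_synonym ('a, 'b) md = "'a monoid \<times> 'b monoid \<times> ('a \<Rightarrow> 'b) \<times> ('b \<Rightarrow> 'a)"

definition md_A :: "('a, 'b) md \<Rightarrow> 'a monoid" where "md_A M = fst M"
definition md_B :: "('a, 'b) md \<Rightarrow> 'b monoid" where "md_B M = fst (snd M)"
definition md_phi :: "('a, 'b) md \<Rightarrow> 'a \<Rightarrow> 'b" where "md_phi M = fst (snd (snd M))"
definition md_psi :: "('a, 'b) md \<Rightarrow> 'b \<Rightarrow> 'a" where "md_psi M = snd (snd (snd M))"

definition moore_diagram :: "('a, 'b) md \<Rightarrow> bool" where
  "moore_diagram M \<longleftrightarrow>
     comm_group (md_A M) \<and> comm_group (md_B M) \<and>
     md_phi M \<in> hom (md_A M) (md_B M) \<and> md_psi M \<in> hom (md_B M) (md_A M) \<and>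
     (\<forall>a\<in>carrier (md_A M). md_psi M (md_phi M a) = \<one>\<^bsub>md_A M\<^esub>) \<and>
     (\<forall>b\<in>carrier (md_B M). md_phi M (md_psi M b) = b \<otimes>\<^bsub>md_B M\<^esub> b)"

definition md_phibar :: "('a, 'b) md \<Rightarrow> 'a set \<Rightarrow> 'b" where
  "md_phibar M = (\<lambda>C\<in>carrier (mod2 (md_A M)). md_phi M (SOME a. a \<in> C))"

definition exact_md :: "('a, 'b) md \<Rightarrow> bool" where
  "exact_md M \<longleftrightarrow> moore_diagram M \<and>
     inj_on (md_phibar M) (carrier (mod2 (md_A M))) \<and>
     md_phibar M ` carrier (mod2 (md_A M)) = kernel (md_B M) (md_A M) (md_psi M) \<and>
     md_psi M ` carrier (md_B M) = tors2 (md_A M)"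

definition emd_hom :: "('a, 'b) md \<Rightarrow> ('c, 'd) md \<Rightarrow> (('a \<Rightarrow> 'c) \<times> ('b \<Rightarrow> 'd)) set" where
  "emd_hom M M' = {(f, g). f \<in> hom_ext (md_A M) (md_A M') \<and> g \<in> hom_ext (md_B M) (md_B M') \<and>
      (\<forall>a\<in>carrier (md_A M). g (md_phi M a) = md_phi M' (f a)) \<and>
      (\<forall>b\<in>carrier (md_B M). f (md_psi M b) = md_psi M' (g b))}"

definition emd_group :: "('a, 'b) md \<Rightarrow> ('c, 'd) md \<Rightarrow> (('a \<Rightarrow> 'c) \<times> ('b \<Rightarrow> 'd)) monoid" where
  "emd_group M M' = \<lparr>carrier = emd_hom M M',
     monoid.mult = (\<lambda>p q. (\<lambda>x\<in>carrier (md_A M). fst p x \<otimes>\<^bsub>md_A M'\<^esub> fst q x,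
                    \<lambda>y\<in>carrier (md_B M). snd p y \<otimes>\<^bsub>md_B M'\<^esub> snd q y)),
     monoid.one = (\<lambda>x\<in>carrier (md_A M). \<one>\<^bsub>md_A M'\<^esub>, \<lambda>y\<in>carrier (md_B M). \<one>\<^bsub>md_B M'\<^esub>)\<rparr>"

definition emd_comp :: "('a, 'b) md \<Rightarrow> ('c \<Rightarrow> 'e) \<times> ('d \<Rightarrow> 'f) \<Rightarrow> ('a \<Rightarrow> 'c) \<times> ('b \<Rightarrow> 'd)
    \<Rightarrow> ('a \<Rightarrow> 'e) \<times> ('b \<Rightarrow> 'f)" where
  "emd_comp M q p = (compose (carrier (md_A M)) (fst q) (fst p), compose (carrier (md_B M)) (snd q) (snd p))"

definition emd_id :: "('a, 'b) md \<Rightarrow> ('a \<Rightarrow> 'a) \<times> ('b \<Rightarrow> 'b)" where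
  "emd_id M = (\<lambda>x\<in>carrier (md_A M). x, \<lambda>y\<in>carrier (md_B M). y)"

definition md_alpha :: "('a \<Rightarrow> 'c) \<times> ('b \<Rightarrow> 'd) \<Rightarrow> 'a \<Rightarrow> 'c" where
  "md_alpha p = fst p"

definition emd_iota :: "('a, 'b) md \<Rightarrow> ('c, 'd) md \<Rightarrow> ('a \<Rightarrow> 'c set) \<Rightarrow> ('a \<Rightarrow> 'c) \<times> ('b \<Rightarrow> 'd)" where
  "emd_iota M M' h = (\<lambda>x\<in>carrier (md_A M). \<one>\<^bsub>md_A M'\<^esub>,
                      \<lambda>y\<in>carrier (md_B M). md_phibar M' (h (md_psi M y)))"

(* functoriality of Hom(alpha(-)[2], alpha(-)/2): for u : A_N \<rightarrow> A_M and u' : A_M' \<rightarrow> A_N',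
   h \<mapsto> (u'/2) \<circ> h \<circ> u|_{A_N[2]} *)
definition hom2_map :: "'e monoid \<Rightarrow> ('e \<Rightarrow> 'a) \<Rightarrow> 'c monoid \<Rightarrow> 'g monoid \<Rightarrow> ('c \<Rightarrow> 'g)
    \<Rightarrow> ('a \<Rightarrow> 'c set) \<Rightarrow> 'e \<Rightarrow> 'g set" where
  "hom2_map AN u AM' AN' u' h = (\<lambda>x\<in>carrier (tors2_grp AN). mod2_map AM' AN' u' (h (u x)))"

end

theory Submission
  imports Defs
begin

lemma hom_group_comm:
  assumes G: "group G" and H: "comm_group H"
  shows "comm_group (hom_group G H)"
proof -
  interpret G: group G by fact
  interpret H: comm_group H by fact
  have mem: "f \<in> carrier (hom_group G H) \<longleftrightarrow> f \<in> hom G H \<and> f \<in> extensional (carrier G)" for f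
    by (simp add: hom_group_def hom_ext_def)
  have mul: "f \<otimes>\<^bsub>hom_group G H\<^esub> g = (\<lambda>x\<in>carrier G. f x \<otimes>\<^bsub>H\<^esub> g x)" for f g
    by (simp add: hom_group_def)
  have one: "\<one>\<^bsub>hom_group G H\<^esub> = (\<lambda>x\<in>carrier G. \<one>\<^bsub>H\<^esub>)"
    by (simp add: hom_group_def)
  show ?thesis
  proof (rule comm_groupI, goal_cases)
    case (1 f g)
    then show ?case unfolding mem mul
      by (auto simp: hom_def Pi_def H.m_ac)
  next
    case 2
    then show ?case unfolding mem one by (auto simp: hom_def Pi_def)
  next
    case (3 f g h)
    then show ?case unfolding mem mul
      by (auto simp: hom_def Pi_def H.m_assoc intro!: restrict_ext)
  next
    case (4 f g)
    then show ?case unfolding mem mul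
      by (auto simp: hom_def Pi_def H.m_comm intro!: restrict_ext)
  next
    case (5 f)
    then show ?case unfolding mem mul one
      by (auto simp: hom_def Pi_def extensional_def intro!: ext)
  next
    case (6 f)
    then have f: "f \<in> hom G H" "f \<in> extensional (carrier G)" unfolding mem by auto
    define g where "g = (\<lambda>x\<in>carrier G. inv\<^bsub>H\<^esub> f x)"
    have "g \<in> hom G H" using f unfolding g_def
      by (auto simp: hom_def Pi_def H.inv_mult_group H.m_comm G.m_closed)
    moreover have "g \<otimes>\<^bsub>hom_group G H\<^esub> f = \<one>\<^bsub>hom_group G H\<^esub>"
      unfolding mul one g_def using f by (auto simp: hom_def Pi_def intro!: restrict_ext)
    moreover have "g \<in> extensional (carrier G)" by (simp add: g_def)
    ultimately show ?case by (intro bexI[of _ g]) (auto simp: mem)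
  qed
qed

locale xmd =
  fixes M :: "('a, 'b) md"
  assumes exact: "exact_md M"
begin

abbreviation "A \<equiv> md_A M"
abbreviation "B \<equiv> md_B M"
abbreviation "phi \<equiv> md_phi M"
abbreviation "psi \<equiv> md_psi M"

lemma md: "moore_diagram M" using exact by (simp add: exact_md_def)

lemma A: "comm_group A" and B: "comm_group B"
  and phi_hom: "phi \<in> hom A B" and psi_hom: "psi \<in> hom B A"
  and psi_phi: "\<And>a. a \<in> carrier A \<Longrightarrow> psi (phi a) = \<one>\<^bsub>A\<^esub>"
  and phi_psi: "\<And>b. b \<in> carrier B \<Longrightarrow> phi (psi b) = b \<otimes>\<^bsub>B\<^esub> b"
  using md by (auto simp: moore_diagram_def)

sublocale A: comm_group A by (rule A)
sublocale B: comm_group B by (rule B)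
sublocale phi: group_hom A B phi by (simp add: group_hom_def group_hom_axioms_def A.is_group B.is_group phi_hom)
sublocale psi: group_hom B A psi by (simp add: group_hom_def group_hom_axioms_def A.is_group B.is_group psi_hom)

lemma phibar_inj: "inj_on (md_phibar M) (carrier (mod2 A))"
  and phibar_img: "md_phibar M ` carrier (mod2 A) = kernel B A psi"
  and psi_img: "psi ` carrier B = tors2 A"
  using exact by (auto simp: exact_md_def)

lemma twoG_sub: "subgroup (twoG A) A"
proof (rule A.subgroupI)
  show "twoG A \<subseteq> carrier A" by (auto simp: twoG_def)
  show "twoG A \<noteq> {}" using A.one_closed unfolding twoG_def by force
next
  fix x assume "x \<in> twoG A"
  then obtain y where y: "y \<in> carrier A" "x = y \<otimes>\<^bsub>A\<^esub> y" by (auto simp: twoG_def)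
  then have "inv\<^bsub>A\<^esub> x = inv\<^bsub>A\<^esub> y \<otimes>\<^bsub>A\<^esub> inv\<^bsub>A\<^esub> y" by (simp add: A.inv_mult_group)
  then show "inv\<^bsub>A\<^esub> x \<in> twoG A" using y by (auto simp: twoG_def)
next
  fix x y assume "x \<in> twoG A" "y \<in> twoG A"
  then obtain u v where "u \<in> carrier A" "x = u \<otimes>\<^bsub>A\<^esub> u" "v \<in> carrier A" "y = v \<otimes>\<^bsub>A\<^esub> v"
    by (auto simp: twoG_def)
  then have "x \<otimes>\<^bsub>A\<^esub> y = (u \<otimes>\<^bsub>A\<^esub> v) \<otimes>\<^bsub>A\<^esub> (u \<otimes>\<^bsub>A\<^esub> v)" "u \<otimes>\<^bsub>A\<^esub> v \<in> carrier A"
    by (simp_all add: A.m_ac)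
  then show "x \<otimes>\<^bsub>A\<^esub> y \<in> twoG A" unfolding twoG_def by blast
qed

lemma phi_sq: "a \<in> carrier A \<Longrightarrow> phi (a \<otimes>\<^bsub>A\<^esub> a) = \<one>\<^bsub>B\<^esub>"
proof -
  assume a: "a \<in> carrier A"
  have "phi (a \<otimes>\<^bsub>A\<^esub> a) = phi a \<otimes>\<^bsub>B\<^esub> phi a" using a by simp
  also have "\<dots> = phi (psi (phi a))" using a by (simp add: phi_psi)
  also have "\<dots> = \<one>\<^bsub>B\<^esub>" using a by (simp add: psi_phi)
  finally show ?thesis .
qed

lemma phi_two: "x \<in> twoG A \<Longrightarrow> phi x = \<one>\<^bsub>B\<^esub>"
  using phi_sq by (auto simp: twoG_def)

lemma phibar_coset: assumes a: "a \<in> carrier A"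
  shows "md_phibar M (twoG A #>\<^bsub>A\<^esub> a) = phi a"
proof -
  have mem: "twoG A #>\<^bsub>A\<^esub> a \<in> carrier (mod2 A)"
    using a twoG_sub by (auto simp: mod2_def FactGroup_def RCOSETS_def)
  have ex: "a \<in> twoG A #>\<^bsub>A\<^esub> a" using a twoG_sub by (simp add: A.rcos_self)
  define x where "x = (SOME x. x \<in> twoG A #>\<^bsub>A\<^esub> a)"
  have "x \<in> twoG A #>\<^bsub>A\<^esub> a" unfolding x_def using ex by (rule someI)
  then obtain h where h: "h \<in> twoG A" "x = h \<otimes>\<^bsub>A\<^esub> a" by (auto simp: r_coset_def)
  have hc: "h \<in> carrier A" using h twoG_sub by (auto dest: subgroup.mem_carrier)
  have "md_phibar M (twoG A #>\<^bsub>A\<^esub> a) = phi x" using mem by (simp add: md_phibar_def x_def)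
  also have "\<dots> = phi a" using h hc a phi_two by simp
  finally show ?thesis .
qed

lemma carrier_mod2: "carrier (mod2 A) = (\<lambda>a. twoG A #>\<^bsub>A\<^esub> a) ` carrier A"
  by (simp add: mod2_def carrier_FactGroup)

lemma phi_one_iff: assumes a: "a \<in> carrier A"
  shows "phi a = \<one>\<^bsub>B\<^esub> \<longleftrightarrow> a \<in> twoG A"
proof
  assume p: "phi a = \<one>\<^bsub>B\<^esub>"
  have m1: "twoG A #>\<^bsub>A\<^esub> a \<in> carrier (mod2 A)" using a carrier_mod2 by auto
  have m2: "twoG A #>\<^bsub>A\<^esub> \<one>\<^bsub>A\<^esub> \<in> carrier (mod2 A)" using carrier_mod2 by auto
  have "md_phibar M (twoG A #>\<^bsub>A\<^esub> a) = md_phibar M (twoG A #>\<^bsub>A\<^esub> \<one>\<^bsub>A\<^esub>)"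
    using p a by (simp add: phibar_coset)
  then have "twoG A #>\<^bsub>A\<^esub> a = twoG A #>\<^bsub>A\<^esub> \<one>\<^bsub>A\<^esub>"
    using phibar_inj m1 m2 by (auto dest: inj_onD)
  moreover have "twoG A #>\<^bsub>A\<^esub> \<one>\<^bsub>A\<^esub> = twoG A"
    using twoG_sub by (simp add: A.coset_join2 subgroup.one_closed)
  moreover have "a \<in> twoG A #>\<^bsub>A\<^esub> a" using a twoG_sub by (simp add: A.rcos_self)
  ultimately show "a \<in> twoG A" by simp
qed (simp add: phi_two)

lemma kerpsi: assumes b: "b \<in> carrier B" "psi b = \<one>\<^bsub>A\<^esub>"
  shows "\<exists>a\<in>carrier A. b = phi a"
proof -
  have "b \<in> md_phibar M ` carrier (mod2 A)" using phibar_img b by (simp add: kernel_def)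
  then obtain a where "a \<in> carrier A" "b = md_phibar M (twoG A #>\<^bsub>A\<^esub> a)"
    using carrier_mod2 by auto
  then show ?thesis by (auto simp: phibar_coset)
qed

lemma psi_tors: "b \<in> carrier B \<Longrightarrow> psi b \<in> tors2 A"
  using psi_img by auto

lemma psi_surj: assumes "t \<in> tors2 A" shows "\<exists>b\<in>carrier B. psi b = t"
proof -
  have "t \<in> psi ` carrier B" using psi_img assms by simp
  then show ?thesis by blast
qed

lemma tors2_sub: "subgroup (tors2 A) A"
proof (rule A.subgroupI)
  show "tors2 A \<subseteq> carrier A" by (auto simp: tors2_def)
  show "tors2 A \<noteq> {}" using A.one_closed unfolding tors2_def by force
next
  fix x assume "x \<in> tors2 A"
  then show "inv\<^bsub>A\<^esub> x \<in> tors2 A"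
    by (auto simp: tors2_def A.inv_mult_group[symmetric])
next
  fix x y assume "x \<in> tors2 A" "y \<in> tors2 A"
  then show "x \<otimes>\<^bsub>A\<^esub> y \<in> tors2 A"
    by (auto simp: tors2_def A.m_ac)
qed

lemma tors2_inv: "t \<in> tors2 A \<Longrightarrow> inv\<^bsub>A\<^esub> t = t"
  by (auto simp: tors2_def intro: A.inv_equality)

lemma phi_tors: "t \<in> tors2 A \<Longrightarrow> t \<in> carrier A" by (simp add: tors2_def)

end

lemma hom_twoG: "f \<in> hom G H \<Longrightarrow> x \<in> twoG G \<Longrightarrow> f x \<in> twoG H"
  unfolding twoG_def by (auto simp: hom_def Pi_def)

lemma hom_tors2: "f \<in> hom G H \<Longrightarrow> group G \<Longrightarrow> group H \<Longrightarrow> x \<in> tors2 G \<Longrightarrow> f x \<in> tors2 H"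
  unfolding tors2_def by (auto simp: hom_in_carrier hom_one simp flip: hom_mult)

locale xmd2 = M: xmd M + M': xmd M' for M :: "('a,'b) md" and M' :: "('c,'d) md"
begin

definition G0set :: "('a \<Rightarrow> 'c) \<Rightarrow> ('b \<times> 'd) set" where
  "G0set f = (\<lambda>a. (M.phi a, M'.phi (f a))) ` carrier M.A"

definition FF :: "('a \<Rightarrow> 'c) \<Rightarrow> ('b \<times> 'd) set set" where
  "FF f = {\<Gamma>. \<Gamma> \<subseteq> carrier M.B \<times> carrier M'.B \<and>
      (\<forall>x y z. (x,y)\<in>\<Gamma> \<longrightarrow> (x,z)\<in>\<Gamma> \<longrightarrow> y = z) \<and> G0set f \<subseteq> \<Gamma> \<and>
      (\<forall>x y x' y'. (x,y)\<in>\<Gamma> \<longrightarrow> (x',y')\<in>\<Gamma> \<longrightarrow> (x \<otimes>\<^bsub>M.B\<^esub> x', y \<otimes>\<^bsub>M'.B\<^esub> y')\<in>\<Gamma>) \<and>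
      (\<forall>x y. (x,y)\<in>\<Gamma> \<longrightarrow> (inv\<^bsub>M.B\<^esub> x, inv\<^bsub>M'.B\<^esub> y)\<in>\<Gamma>) \<and>
      (\<forall>x y. (x,y)\<in>\<Gamma> \<longrightarrow> M'.psi y = f (M.psi x))}"

lemma FF_D:
  assumes "\<Gamma> \<in> FF f"
  shows Fsub: "\<Gamma> \<subseteq> carrier M.B \<times> carrier M'.B"
    and Fsv: "\<And>x y z. (x,y)\<in>\<Gamma> \<Longrightarrow> (x,z)\<in>\<Gamma> \<Longrightarrow> y = z"
    and F0: "G0set f \<subseteq> \<Gamma>"
    and Fm: "\<And>x y x' y'. (x,y)\<in>\<Gamma> \<Longrightarrow> (x',y')\<in>\<Gamma> \<Longrightarrow> (x \<otimes>\<^bsub>M.B\<^esub> x', y \<otimes>\<^bsub>M'.B\<^esub> y')\<in>\<Gamma>"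
    and Fi: "\<And>x y. (x,y)\<in>\<Gamma> \<Longrightarrow> (inv\<^bsub>M.B\<^esub> x, inv\<^bsub>M'.B\<^esub> y)\<in>\<Gamma>"
    and Fp: "\<And>x y. (x,y)\<in>\<Gamma> \<Longrightarrow> M'.psi y = f (M.psi x)"
  using assms unfolding FF_def by blast+

lemma G0F: assumes f: "f \<in> hom M.A M'.A" shows "G0set f \<in> FF f"
proof -
  interpret f: group_hom M.A M'.A f
    by (simp add: group_hom_def group_hom_axioms_def M.A.is_group M'.A.is_group f)
  have sv: "y = z" if h1: "(x,y) \<in> (G0set f)" and h2: "(x,z) \<in> (G0set f)" for x y z
  proof -
    obtain a1 where a1': "(x,y) = (M.phi a1, M'.phi (f a1))" "a1 \<in> carrier M.A"
      using h1 unfolding G0set_def by (rule imageE)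
    obtain a2 where a2': "(x,z) = (M.phi a2, M'.phi (f a2))" "a2 \<in> carrier M.A"
      using h2 unfolding G0set_def by (rule imageE)
    have a1: "a1 \<in> carrier M.A" "x = M.phi a1" "y = M'.phi (f a1)" using a1' by auto
    have a2: "a2 \<in> carrier M.A" "x = M.phi a2" "z = M'.phi (f a2)" using a2' by auto
    have e: "M.phi a1 = M.phi a2" using a1(2) a2(2) by simp
    have c: "a1 \<otimes>\<^bsub>M.A\<^esub> inv\<^bsub>M.A\<^esub> a2 \<in> carrier M.A" using a1(1) a2(1) by simp
    have "M.phi (a1 \<otimes>\<^bsub>M.A\<^esub> inv\<^bsub>M.A\<^esub> a2) = M.phi a1 \<otimes>\<^bsub>M.B\<^esub> inv\<^bsub>M.B\<^esub> M.phi a2"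
      using a1(1) a2(1) by simp
    also have "\<dots> = \<one>\<^bsub>M.B\<^esub>" unfolding e using a2(1) by simp
    finally have "a1 \<otimes>\<^bsub>M.A\<^esub> inv\<^bsub>M.A\<^esub> a2 \<in> twoG M.A" using M.phi_one_iff[OF c] by blast
    then have "f (a1 \<otimes>\<^bsub>M.A\<^esub> inv\<^bsub>M.A\<^esub> a2) \<in> twoG M'.A" by (rule hom_twoG[OF f])
    then have "M'.phi (f (a1 \<otimes>\<^bsub>M.A\<^esub> inv\<^bsub>M.A\<^esub> a2)) = \<one>\<^bsub>M'.B\<^esub>" by (rule M'.phi_two)
    moreover have "M'.phi (f (a1 \<otimes>\<^bsub>M.A\<^esub> inv\<^bsub>M.A\<^esub> a2)) = M'.phi (f a1) \<otimes>\<^bsub>M'.B\<^esub> inv\<^bsub>M'.B\<^esub> M'.phi (f a2)"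
      using a1(1) a2(1) by simp
    ultimately have eq: "M'.phi (f a1) \<otimes>\<^bsub>M'.B\<^esub> inv\<^bsub>M'.B\<^esub> M'.phi (f a2) = \<one>\<^bsub>M'.B\<^esub>" by simp
    have "M'.phi (f a1) = (M'.phi (f a1) \<otimes>\<^bsub>M'.B\<^esub> inv\<^bsub>M'.B\<^esub> M'.phi (f a2)) \<otimes>\<^bsub>M'.B\<^esub> M'.phi (f a2)"
      using a1(1) a2(1) by (simp add: M'.B.m_assoc)
    also have "\<dots> = M'.phi (f a2)" unfolding eq using a2(1) by simp
    finally show ?thesis using a1(3) a2(3) by simp
  qed
  show ?thesis unfolding FF_def
  proof (intro CollectI conjI allI impI)
    show "(G0set f) \<subseteq> carrier M.B \<times> carrier M'.B" by (auto simp: G0set_def)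
  next
    fix x y z assume "(x,y) \<in> (G0set f)" "(x,z) \<in> (G0set f)" then show "y = z" by (rule sv)
  next
    fix x y x' y' assume "(x,y) \<in> (G0set f)" "(x',y') \<in> (G0set f)"
    then obtain a a' where "a \<in> carrier M.A" "a' \<in> carrier M.A" "x = M.phi a" "y = M'.phi (f a)"
        "x' = M.phi a'" "y' = M'.phi (f a')" unfolding G0set_def by blast
    then show "(x \<otimes>\<^bsub>M.B\<^esub> x', y \<otimes>\<^bsub>M'.B\<^esub> y') \<in> (G0set f)" unfolding G0set_def
      by (auto intro!: image_eqI[of _ _ "a \<otimes>\<^bsub>M.A\<^esub> a'"])
  next
    fix x y assume "(x,y) \<in> (G0set f)"
    then obtain a where "a \<in> carrier M.A" "x = M.phi a" "y = M'.phi (f a)" unfolding G0set_def by blast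
    then show "(inv\<^bsub>M.B\<^esub> x, inv\<^bsub>M'.B\<^esub> y) \<in> (G0set f)" unfolding G0set_def
      by (auto intro!: image_eqI[of _ _ "inv\<^bsub>M.A\<^esub> a"])
  next
    fix x y assume "(x,y) \<in> (G0set f)"
    then obtain a where "a \<in> carrier M.A" "x = M.phi a" "y = M'.phi (f a)" unfolding G0set_def by blast
    then show "M'.psi y = f (M.psi x)" by (simp add: M.psi_phi M'.psi_phi)
  qed simp
qed


lemma FF_max: assumes f: "f \<in> hom M.A M'.A" shows "\<exists>\<Gamma>\<in>(FF f). \<forall>Y\<in>(FF f). \<Gamma> \<subseteq> Y \<longrightarrow> Y = \<Gamma>"
proof (rule Zorn_Lemma2, intro ballI)
  fix C assume C: "C \<in> chains (FF f)"
  show "\<exists>U\<in>(FF f). \<forall>Z\<in>C. Z \<subseteq> U"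
  proof (cases "C = {}")
    case True then show ?thesis using G0F[OF f] by auto
  next
    case False
    have CF: "C \<subseteq> (FF f)" and ch: "\<And>XX Y. XX \<in> C \<Longrightarrow> Y \<in> C \<Longrightarrow> XX \<subseteq> Y \<or> Y \<subseteq> XX"
      using C by (auto simp: chains_def chain_subset_def)
    have "\<Union>C \<in> (FF f)" unfolding FF_def
    proof (intro CollectI conjI allI impI)
      show "\<Union>C \<subseteq> carrier M.B \<times> carrier M'.B" using CF Fsub by blast
      show "(G0set f) \<subseteq> \<Union>C" using CF False F0 by blast
    next
      fix x y z assume "(x,y) \<in> \<Union>C" "(x,z) \<in> \<Union>C"
      then obtain XX Y where "XX \<in> C" "Y \<in> C" "(x,y) \<in> XX" "(x,z) \<in> Y" by auto
      moreover from this ch have "XX \<subseteq> Y \<or> Y \<subseteq> XX" by auto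
      ultimately show "y = z" using CF Fsv by blast
    next
      fix x y x' y' assume "(x,y) \<in> \<Union>C" "(x',y') \<in> \<Union>C"
      then obtain XX Y where XY: "XX \<in> C" "Y \<in> C" "(x,y) \<in> XX" "(x',y') \<in> Y" by auto
      moreover from this ch have "XX \<subseteq> Y \<or> Y \<subseteq> XX" by auto
      ultimately show "(x \<otimes>\<^bsub>M.B\<^esub> x', y \<otimes>\<^bsub>M'.B\<^esub> y') \<in> \<Union>C" using CF Fm
        by (metis UnionI subsetD)
    next
      fix x y assume "(x,y) \<in> \<Union>C"
      then show "(inv\<^bsub>M.B\<^esub> x, inv\<^bsub>M'.B\<^esub> y) \<in> \<Union>C" using CF Fi by blast
    next
      fix x y assume "(x,y) \<in> \<Union>C"
      then show "M'.psi y = f (M.psi x)" using CF Fp by blast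
    qed
    then show ?thesis by auto
  qed
qed


lemma FF_total:
  assumes f: "f \<in> hom M.A M'.A" and GF: "\<Gamma> \<in> FF f" and max: "\<And>XX. XX \<in> FF f \<Longrightarrow> \<Gamma> \<subseteq> XX \<Longrightarrow> XX = \<Gamma>"
    and b: "b \<in> carrier M.B"
  shows "\<exists>y. (b,y) \<in> \<Gamma>"
proof (rule ccontr)
  interpret f: group_hom M.A M'.A f
    by (simp add: group_hom_def group_hom_axioms_def M.A.is_group M'.A.is_group f)
  note Gsub = Fsub[OF GF] and Gsv = Fsv[OF GF] and G0G = F0[OF GF] and Gm = Fm[OF GF] and Gi = Fi[OF GF] and Gp = Fp[OF GF]
  assume nb: "\<nexists>y. (b,y) \<in> \<Gamma>"
  have "f (M.psi b) \<in> tors2 M'.A"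
    using hom_tors2[OF f M.A.is_group M'.A.is_group M.psi_tors[OF b]] .
  then obtain b' where b': "b' \<in> carrier M'.B" "M'.psi b' = f (M.psi b)" using M'.psi_surj by blast
  have psib: "M.psi b \<in> carrier M.A" using b by simp
  define G' where "G' = \<Gamma> \<union> (\<lambda>(x,y). (b \<otimes>\<^bsub>M.B\<^esub> x, b' \<otimes>\<^bsub>M'.B\<^esub> y)) ` \<Gamma>"
  have bb: "(b \<otimes>\<^bsub>M.B\<^esub> b, b' \<otimes>\<^bsub>M'.B\<^esub> b') \<in> \<Gamma>"
  proof -
    have "(M.phi (M.psi b), M'.phi (f (M.psi b))) \<in> \<Gamma>" using G0G psib by (auto simp: G0set_def)
    moreover have "b' \<otimes>\<^bsub>M'.B\<^esub> b' = M'.phi (f (M.psi b))" using b' M'.phi_psi[of b'] by simp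
    ultimately show ?thesis using b by (simp add: M.phi_psi)
  qed
  have cancel: "\<And>w. w \<in> carrier M.B \<Longrightarrow> b \<otimes>\<^bsub>M.B\<^esub> (inv\<^bsub>M.B\<^esub> b \<otimes>\<^bsub>M.B\<^esub> w) = w"
    using b by (simp add: M.B.m_assoc[symmetric] M.B.r_inv)
  have cancel': "\<And>w. w \<in> carrier M'.B \<Longrightarrow> b' \<otimes>\<^bsub>M'.B\<^esub> (inv\<^bsub>M'.B\<^esub> b' \<otimes>\<^bsub>M'.B\<^esub> w) = w"
    using b' by (simp add: M'.B.m_assoc[symmetric] M'.B.r_inv)
  have inG: "x \<in> carrier M.B" "y \<in> carrier M'.B" if "(x,y) \<in> \<Gamma>" for x y using that Gsub by auto
  have G'F: "G' \<in> (FF f)" unfolding FF_def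
  proof (intro CollectI conjI allI impI)
    show "G' \<subseteq> carrier M.B \<times> carrier M'.B" using Gsub b b' by (auto simp: G'_def)
    show "(G0set f) \<subseteq> G'" using G0G by (auto simp: G'_def)
  next
    fix x y z assume xy: "(x,y) \<in> G'" and xz: "(x,z) \<in> G'"
    show "y = z"
    proof (cases "(x,y) \<in> \<Gamma>")
      case True
      show ?thesis
      proof (cases "(x,z) \<in> \<Gamma>")
        case True then show ?thesis using \<open>(x,y) \<in> \<Gamma>\<close> Gsv by blast
      next
        case False
        then obtain x1 z1 where h: "(x1,z1) \<in> \<Gamma>" "x = b \<otimes>\<^bsub>M.B\<^esub> x1" "z = b' \<otimes>\<^bsub>M'.B\<^esub> z1"
          using xz by (auto simp: G'_def)
        have "(x \<otimes>\<^bsub>M.B\<^esub> inv\<^bsub>M.B\<^esub> x1, y \<otimes>\<^bsub>M'.B\<^esub> inv\<^bsub>M'.B\<^esub> z1) \<in> \<Gamma>"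
          using Gm[OF True Gi[OF h(1)]] .
        moreover have "x \<otimes>\<^bsub>M.B\<^esub> inv\<^bsub>M.B\<^esub> x1 = b" using h inG[OF h(1)] b
          by (simp add: M.B.m_assoc M.B.r_inv)
        ultimately show ?thesis using nb by blast
      qed
    next
      case False
      then obtain x1 y1 where h: "(x1,y1) \<in> \<Gamma>" "x = b \<otimes>\<^bsub>M.B\<^esub> x1" "y = b' \<otimes>\<^bsub>M'.B\<^esub> y1"
        using xy by (auto simp: G'_def)
      show ?thesis
      proof (cases "(x,z) \<in> \<Gamma>")
        case True
        have "(x \<otimes>\<^bsub>M.B\<^esub> inv\<^bsub>M.B\<^esub> x1, z \<otimes>\<^bsub>M'.B\<^esub> inv\<^bsub>M'.B\<^esub> y1) \<in> \<Gamma>"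
          using Gm[OF True Gi[OF h(1)]] .
        moreover have "x \<otimes>\<^bsub>M.B\<^esub> inv\<^bsub>M.B\<^esub> x1 = b" using h inG[OF h(1)] b
          by (simp add: M.B.m_assoc M.B.r_inv)
        ultimately show ?thesis using nb by blast
      next
        case False
        then obtain x2 z2 where h2: "(x2,z2) \<in> \<Gamma>" "x = b \<otimes>\<^bsub>M.B\<^esub> x2" "z = b' \<otimes>\<^bsub>M'.B\<^esub> z2"
          using xz by (auto simp: G'_def)
        have "x1 = x2" using h h2 inG[OF h(1)] inG[OF h2(1)] b by (metis M.B.l_cancel)
        then show ?thesis using h h2 Gsv by blast
      qed
    qed
  next
    fix x y x' y' assume xy: "(x,y) \<in> G'" and xy': "(x',y') \<in> G'"
    show "(x \<otimes>\<^bsub>M.B\<^esub> x', y \<otimes>\<^bsub>M'.B\<^esub> y') \<in> G'"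
    proof (cases "(x,y) \<in> \<Gamma>")
      case T1: True
      show ?thesis
      proof (cases "(x',y') \<in> \<Gamma>")
        case True then show ?thesis using T1 Gm by (auto simp: G'_def)
      next
        case False
        then obtain x2 y2 where h2: "(x2,y2) \<in> \<Gamma>" "x' = b \<otimes>\<^bsub>M.B\<^esub> x2" "y' = b' \<otimes>\<^bsub>M'.B\<^esub> y2"
          using xy' by (auto simp: G'_def)
        have "(x \<otimes>\<^bsub>M.B\<^esub> x2, y \<otimes>\<^bsub>M'.B\<^esub> y2) \<in> \<Gamma>" using Gm[OF T1 h2(1)] .
        moreover have "x \<otimes>\<^bsub>M.B\<^esub> x' = b \<otimes>\<^bsub>M.B\<^esub> (x \<otimes>\<^bsub>M.B\<^esub> x2)"
                  "y \<otimes>\<^bsub>M'.B\<^esub> y' = b' \<otimes>\<^bsub>M'.B\<^esub> (y \<otimes>\<^bsub>M'.B\<^esub> y2)"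
          using h2 inG[OF h2(1)] inG[OF T1] b b' by (simp_all add: M.B.m_ac M'.B.m_ac)
        ultimately show ?thesis by (force simp: G'_def)
      qed
    next
      case False
      then obtain x1 y1 where h: "(x1,y1) \<in> \<Gamma>" "x = b \<otimes>\<^bsub>M.B\<^esub> x1" "y = b' \<otimes>\<^bsub>M'.B\<^esub> y1"
        using xy by (auto simp: G'_def)
      show ?thesis
      proof (cases "(x',y') \<in> \<Gamma>")
        case True
        have "(x1 \<otimes>\<^bsub>M.B\<^esub> x', y1 \<otimes>\<^bsub>M'.B\<^esub> y') \<in> \<Gamma>" using Gm[OF h(1) True] .
        moreover have "x \<otimes>\<^bsub>M.B\<^esub> x' = b \<otimes>\<^bsub>M.B\<^esub> (x1 \<otimes>\<^bsub>M.B\<^esub> x')"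
                  "y \<otimes>\<^bsub>M'.B\<^esub> y' = b' \<otimes>\<^bsub>M'.B\<^esub> (y1 \<otimes>\<^bsub>M'.B\<^esub> y')"
          using h inG[OF h(1)] inG[OF True] b b' by (simp_all add: M.B.m_ac M'.B.m_ac)
        ultimately show ?thesis by (force simp: G'_def)
      next
        case False
        then obtain x2 y2 where h2: "(x2,y2) \<in> \<Gamma>" "x' = b \<otimes>\<^bsub>M.B\<^esub> x2" "y' = b' \<otimes>\<^bsub>M'.B\<^esub> y2"
          using xy' by (auto simp: G'_def)
        have "((b \<otimes>\<^bsub>M.B\<^esub> b) \<otimes>\<^bsub>M.B\<^esub> (x1 \<otimes>\<^bsub>M.B\<^esub> x2), (b' \<otimes>\<^bsub>M'.B\<^esub> b') \<otimes>\<^bsub>M'.B\<^esub> (y1 \<otimes>\<^bsub>M'.B\<^esub> y2)) \<in> \<Gamma>"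
          using Gm[OF bb Gm[OF h(1) h2(1)]] .
        moreover have "x \<otimes>\<^bsub>M.B\<^esub> x' = (b \<otimes>\<^bsub>M.B\<^esub> b) \<otimes>\<^bsub>M.B\<^esub> (x1 \<otimes>\<^bsub>M.B\<^esub> x2)"
                  "y \<otimes>\<^bsub>M'.B\<^esub> y' = (b' \<otimes>\<^bsub>M'.B\<^esub> b') \<otimes>\<^bsub>M'.B\<^esub> (y1 \<otimes>\<^bsub>M'.B\<^esub> y2)"
          using h h2 inG[OF h(1)] inG[OF h2(1)] b b' by (simp_all add: M.B.m_ac M'.B.m_ac)
        ultimately show ?thesis by (simp add: G'_def)
      qed
    qed
  next
    fix x y assume xy: "(x,y) \<in> G'"
    show "(inv\<^bsub>M.B\<^esub> x, inv\<^bsub>M'.B\<^esub> y) \<in> G'"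
    proof (cases "(x,y) \<in> \<Gamma>")
      case True then show ?thesis using Gi by (auto simp: G'_def)
    next
      case False
      then obtain x1 y1 where h: "(x1,y1) \<in> \<Gamma>" "x = b \<otimes>\<^bsub>M.B\<^esub> x1" "y = b' \<otimes>\<^bsub>M'.B\<^esub> y1"
        using xy by (auto simp: G'_def)
      have "(inv\<^bsub>M.B\<^esub> (b \<otimes>\<^bsub>M.B\<^esub> b) \<otimes>\<^bsub>M.B\<^esub> inv\<^bsub>M.B\<^esub> x1, inv\<^bsub>M'.B\<^esub> (b' \<otimes>\<^bsub>M'.B\<^esub> b') \<otimes>\<^bsub>M'.B\<^esub> inv\<^bsub>M'.B\<^esub> y1) \<in> \<Gamma>"
        using Gm[OF Gi[OF bb] Gi[OF h(1)]] .
      moreover have "inv\<^bsub>M.B\<^esub> x = b \<otimes>\<^bsub>M.B\<^esub> (inv\<^bsub>M.B\<^esub> (b \<otimes>\<^bsub>M.B\<^esub> b) \<otimes>\<^bsub>M.B\<^esub> inv\<^bsub>M.B\<^esub> x1)"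
        using h inG[OF h(1)] b by (simp add: M.B.inv_mult_group M.B.m_ac M.B.r_inv cancel)
      moreover have "inv\<^bsub>M'.B\<^esub> y = b' \<otimes>\<^bsub>M'.B\<^esub> (inv\<^bsub>M'.B\<^esub> (b' \<otimes>\<^bsub>M'.B\<^esub> b') \<otimes>\<^bsub>M'.B\<^esub> inv\<^bsub>M'.B\<^esub> y1)"
        using h inG[OF h(1)] b' by (simp add: M'.B.inv_mult_group M'.B.m_ac M'.B.r_inv cancel')
      ultimately show ?thesis by (force simp: G'_def)
    qed
  next
    fix x y assume xy: "(x,y) \<in> G'"
    show "M'.psi y = f (M.psi x)"
    proof (cases "(x,y) \<in> \<Gamma>")
      case True then show ?thesis using Gp by blast
    next
      case False
      then obtain x1 y1 where h: "(x1,y1) \<in> \<Gamma>" "x = b \<otimes>\<^bsub>M.B\<^esub> x1" "y = b' \<otimes>\<^bsub>M'.B\<^esub> y1"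
        using xy by (auto simp: G'_def)
      then show ?thesis using inG[OF h(1)] b b' Gp[OF h(1)] by simp
    qed
  qed
  have "(b \<otimes>\<^bsub>M.B\<^esub> \<one>\<^bsub>M.B\<^esub>, b' \<otimes>\<^bsub>M'.B\<^esub> \<one>\<^bsub>M'.B\<^esub>) \<in> G'"
  proof -
    have "(M.phi \<one>\<^bsub>M.A\<^esub>, M'.phi (f \<one>\<^bsub>M.A\<^esub>)) \<in> G0set f" unfolding G0set_def by (rule imageI) simp
    then have "(M.phi \<one>\<^bsub>M.A\<^esub>, M'.phi (f \<one>\<^bsub>M.A\<^esub>)) \<in> \<Gamma>" using G0G by blast
    then have "(\<one>\<^bsub>M.B\<^esub>, \<one>\<^bsub>M'.B\<^esub>) \<in> \<Gamma>" by simp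
    then show ?thesis by (force simp: G'_def)
  qed
  then have "(b, b') \<in> G'" using b b' by simp
  moreover have "\<Gamma> \<subseteq> G'" by (auto simp: G'_def)
  ultimately show False using max[OF G'F] nb by blast
qed


lemma full:
  assumes f: "f \<in> hom M.A M'.A"
  shows "\<exists>g \<in> hom_ext M.B M'.B. (\<forall>a\<in>carrier M.A. g (M.phi a) = M'.phi (f a)) \<and>
           (\<forall>b\<in>carrier M.B. f (M.psi b) = M'.psi (g b))"
proof -
  obtain \<Gamma> where GF: "\<Gamma> \<in> FF f" and max: "\<And>XX. XX \<in> FF f \<Longrightarrow> \<Gamma> \<subseteq> XX \<Longrightarrow> XX = \<Gamma>"
    using FF_max[OF f] by blast
  note Gsub = Fsub[OF GF] and Gsv = Fsv[OF GF] and G0G = F0[OF GF] and Gm = Fm[OF GF] and Gi = Fi[OF GF] and Gp = Fp[OF GF]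
  have total: "\<exists>y. (b,y) \<in> \<Gamma>" if hb: "b \<in> carrier M.B" for b
    apply (rule FF_total[OF f GF])
     apply (erule (1) max)
    apply (rule hb)
    done
  define g where "g = (\<lambda>x\<in>carrier M.B. THE y. (x,y) \<in> \<Gamma>)"
  have gG: "(x, g x) \<in> \<Gamma>" if hx: "x \<in> carrier M.B" for x
  proof -
    obtain y where y: "(x,y) \<in> \<Gamma>" using total[OF hx] by blast
    have "(THE y. (x,y) \<in> \<Gamma>) = y" using y Gsv by blast
    then show ?thesis using y hx by (simp add: g_def)
  qed
  have gval: "g x = y" if "(x,y) \<in> \<Gamma>" for x y
    using gG[of x] that Gsv Gsub by blast
  have "g \<in> hom_ext M.B M'.B"
    unfolding hom_ext_def
  proof
    show "g \<in> hom M.B M'.B"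
    proof (rule homI)
      fix x assume "x \<in> carrier M.B" then show "g x \<in> carrier M'.B" using gG Gsub by blast
    next
      fix x y assume "x \<in> carrier M.B" "y \<in> carrier M.B"
      then show "g (x \<otimes>\<^bsub>M.B\<^esub> y) = g x \<otimes>\<^bsub>M'.B\<^esub> g y" using gval Gm gG by blast
    qed
    show "g \<in> extensional (carrier M.B)" by (simp add: g_def)
  qed
  moreover have "\<forall>a\<in>carrier M.A. g (M.phi a) = M'.phi (f a)"
    using G0G gval by (auto simp: G0set_def)
  moreover have "\<forall>b\<in>carrier M.B. f (M.psi b) = M'.psi (g b)"
    using Gp gG by (metis)
  ultimately show ?thesis by blast
qed

end

lemma hom_ext_restrict: "h \<in> hom G H \<Longrightarrow> group G \<Longrightarrow> (\<lambda>x\<in>carrier G. h x) \<in> hom_ext G H"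
  by (auto simp: hom_ext_def hom_def Pi_def group.is_monoid monoid.m_closed)

context xmd2 begin

lemma emd_homD:
  assumes "(f,g) \<in> emd_hom M M'"
  shows "f \<in> hom M.A M'.A" "g \<in> hom M.B M'.B" "f \<in> extensional (carrier M.A)" "g \<in> extensional (carrier M.B)"
    "\<And>a. a \<in> carrier M.A \<Longrightarrow> g (M.phi a) = M'.phi (f a)"
    "\<And>b. b \<in> carrier M.B \<Longrightarrow> f (M.psi b) = M'.psi (g b)"
  using assms by (auto simp: emd_hom_def hom_ext_def)

lemma reflect_iso:
  assumes p: "(f,g) \<in> emd_hom M M'" and fi: "f \<in> iso M.A M'.A"
  shows "\<exists>q\<in>emd_hom M' M. emd_comp M q (f,g) = emd_id M \<and> emd_comp M' (f,g) q = emd_id M'"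
proof -
  note P = emd_homD[OF p]
  interpret f: group_hom M.A M'.A f
    by (simp add: group_hom_def group_hom_axioms_def M.A.is_group M'.A.is_group P(1))
  interpret g: group_hom M.B M'.B g
    by (simp add: group_hom_def group_hom_axioms_def M.B.is_group M'.B.is_group P(2))
  have finj: "inj_on f (carrier M.A)" and fsurj: "f ` carrier M.A = carrier M'.A"
    using fi by (auto simp: iso_def bij_betw_def)
  have ginj: "inj_on g (carrier M.B)"
  proof (rule inj_on_one_iff'[OF P(2) M.B.is_group M'.B.is_group, THEN iffD2], intro allI impI)
    fix b assume b: "b \<in> carrier M.B" and gb: "g b = \<one>\<^bsub>M'.B\<^esub>"
    have "f (M.psi b) = \<one>\<^bsub>M'.A\<^esub>" using P(6)[OF b] gb by simp
    then have "M.psi b = \<one>\<^bsub>M.A\<^esub>" using finj b f.inj_on_one_iff by simp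
    then obtain a where a: "a \<in> carrier M.A" "b = M.phi a" using M.kerpsi b by blast
    have "M'.phi (f a) = \<one>\<^bsub>M'.B\<^esub>" using P(5)[OF a(1)] gb a by simp
    then have "f a \<in> twoG M'.A" using M'.phi_one_iff a by simp
    then obtain y where y: "y \<in> carrier M'.A" "f a = y \<otimes>\<^bsub>M'.A\<^esub> y" by (auto simp: twoG_def)
    have "y \<in> f ` carrier M.A" using fsurj y(1) by simp
    then obtain x where x: "x \<in> carrier M.A" "y = f x" by (metis imageE)
    have e: "f a = f (x \<otimes>\<^bsub>M.A\<^esub> x)" using x y by simp
    have "a = x \<otimes>\<^bsub>M.A\<^esub> x" using inj_onD[OF finj e] a x by simp
    then show "b = \<one>\<^bsub>M.B\<^esub>" using a x M.phi_sq by simp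
  qed
  have gsurj: "g ` carrier M.B = carrier M'.B"
  proof
    show "g ` carrier M.B \<subseteq> carrier M'.B" by auto
  next
    show "carrier M'.B \<subseteq> g ` carrier M.B"
    proof
      fix b' assume b': "b' \<in> carrier M'.B"
      have "M'.psi b' \<in> tors2 M'.A" using M'.psi_tors b' .
      then have t1: "M'.psi b' \<in> carrier M'.A" "M'.psi b' \<otimes>\<^bsub>M'.A\<^esub> M'.psi b' = \<one>\<^bsub>M'.A\<^esub>"
        by (auto simp: tors2_def)
      have "M'.psi b' \<in> f ` carrier M.A" using fsurj t1(1) by simp
      then obtain t where t: "t \<in> carrier M.A" "f t = M'.psi b'" by (metis imageE)
      have e: "f (t \<otimes>\<^bsub>M.A\<^esub> t) = f \<one>\<^bsub>M.A\<^esub>" using t t1 by simp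
      have "t \<otimes>\<^bsub>M.A\<^esub> t = \<one>\<^bsub>M.A\<^esub>" using inj_onD[OF finj e] t by simp
      then have "t \<in> tors2 M.A" using t by (simp add: tors2_def)
      then obtain b where b: "b \<in> carrier M.B" "M.psi b = t" using M.psi_surj by blast
      define c where "c = b' \<otimes>\<^bsub>M'.B\<^esub> inv\<^bsub>M'.B\<^esub> g b"
      have c: "c \<in> carrier M'.B" using b b' by (simp add: c_def)
      have "M'.psi c = M'.psi b' \<otimes>\<^bsub>M'.A\<^esub> inv\<^bsub>M'.A\<^esub> M'.psi (g b)" using b b' by (simp add: c_def)
      also have "M'.psi (g b) = M'.psi b'" using P(6)[OF b(1)] b t by simp
      finally have "M'.psi c = \<one>\<^bsub>M'.A\<^esub>" using b' by simp
      then obtain a' where a': "a' \<in> carrier M'.A" "c = M'.phi a'" using M'.kerpsi c by blast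
      have "a' \<in> f ` carrier M.A" using fsurj a'(1) by simp
      then obtain a where a: "a \<in> carrier M.A" "a' = f a" by (metis imageE)
      have "g (M.phi a \<otimes>\<^bsub>M.B\<^esub> b) = c \<otimes>\<^bsub>M'.B\<^esub> g b" using a a' b P(5)[OF a(1)] by simp
      also have "\<dots> = b'" using b b' by (simp add: c_def M'.B.m_assoc)
      finally show "b' \<in> g ` carrier M.B" using a b by (metis M.B.m_closed M.phi.hom_closed image_eqI)
    qed
  qed
  define fi' where "fi' = (\<lambda>x\<in>carrier M'.A. inv_into (carrier M.A) f x)"
  define gi' where "gi' = (\<lambda>x\<in>carrier M'.B. inv_into (carrier M.B) g x)"
  have fiA: "fi' x \<in> carrier M.A" "f (fi' x) = x" if "x \<in> carrier M'.A" for x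
    using that fsurj by (auto simp: fi'_def inv_into_into f_inv_into_f)
  have giB: "gi' x \<in> carrier M.B" "g (gi' x) = x" if "x \<in> carrier M'.B" for x
    using that gsurj by (auto simp: gi'_def inv_into_into f_inv_into_f)
  have fif: "fi' (f x) = x" if "x \<in> carrier M.A" for x
    using that finj by (simp add: fi'_def)
  have gig: "gi' (g x) = x" if "x \<in> carrier M.B" for x
    using that ginj by (simp add: gi'_def)
  have fihom: "fi' \<in> hom M'.A M.A"
  proof (rule homI)
    fix x y assume "x \<in> carrier M'.A" "y \<in> carrier M'.A"
    then show "fi' (x \<otimes>\<^bsub>M'.A\<^esub> y) = fi' x \<otimes>\<^bsub>M.A\<^esub> fi' y"
      using fiA fif by (metis M.A.m_closed f.hom_mult)
  qed (simp add: fiA)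
  have gihom: "gi' \<in> hom M'.B M.B"
  proof (rule homI)
    fix x y assume "x \<in> carrier M'.B" "y \<in> carrier M'.B"
    then show "gi' (x \<otimes>\<^bsub>M'.B\<^esub> y) = gi' x \<otimes>\<^bsub>M.B\<^esub> gi' y"
      using giB gig by (metis M.B.m_closed g.hom_mult)
  qed (simp add: giB)
  have q: "(fi', gi') \<in> emd_hom M' M"
    unfolding emd_hom_def hom_ext_def
  proof (simp, intro conjI ballI)
    show "fi' \<in> hom M'.A M.A" "gi' \<in> hom M'.B M.B" by (fact fihom, fact gihom)
    show "fi' \<in> extensional (carrier M'.A)" by (simp add: fi'_def)
    show "gi' \<in> extensional (carrier M'.B)" by (simp add: gi'_def)
  next
    fix a assume a: "a \<in> carrier M'.A"
    have "g (M.phi (fi' a)) = M'.phi a" using P(5) fiA a by simp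
    then show "gi' (M'.phi a) = M.phi (fi' a)" using gig fiA a by (metis M.phi.hom_closed)
  next
    fix b assume b: "b \<in> carrier M'.B"
    have "f (M.psi (gi' b)) = M'.psi b" using P(6) giB b by simp
    then show "fi' (M'.psi b) = M.psi (gi' b)" using fif giB b by (metis M.psi.hom_closed)
  qed
  have "emd_comp M (fi', gi') (f,g) = emd_id M"
    unfolding emd_comp_def emd_id_def using fif gig
    by (auto simp: compose_def intro!: restrict_ext)
  moreover have "emd_comp M' (f,g) (fi', gi') = emd_id M'"
    unfolding emd_comp_def emd_id_def using fiA giB
    by (auto simp: compose_def intro!: restrict_ext)
  ultimately show ?thesis using q by blast
qed

end

context xmd begin

lemma mod2_comm: "comm_group (mod2 A)"
  unfolding mod2_def by (rule A.abelian_FactGroup[OF twoG_sub])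

lemma mod2_carrierE:
  assumes "C \<in> carrier (mod2 A)"
  obtains a where "a \<in> carrier A" "C = twoG A #>\<^bsub>A\<^esub> a"
  using assms carrier_mod2 by auto

lemma mod2_mult: "a \<in> carrier A \<Longrightarrow> b \<in> carrier A \<Longrightarrow>
   (twoG A #>\<^bsub>A\<^esub> a) \<otimes>\<^bsub>mod2 A\<^esub> (twoG A #>\<^bsub>A\<^esub> b) = twoG A #>\<^bsub>A\<^esub> (a \<otimes>\<^bsub>A\<^esub> b)"
  unfolding mod2_def using twoG_sub
  by (simp add: normal.rcos_sum A.normal_iff_subgroup)

lemma phibar_closed: "C \<in> carrier (mod2 A) \<Longrightarrow> md_phibar M C \<in> carrier B"
  by (erule mod2_carrierE) (simp add: phibar_coset)

lemma psi_phibar: "C \<in> carrier (mod2 A) \<Longrightarrow> psi (md_phibar M C) = \<one>\<^bsub>A\<^esub>"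
  by (erule mod2_carrierE) (simp add: phibar_coset psi_phi)

lemma phibar_mult: "C \<in> carrier (mod2 A) \<Longrightarrow> D \<in> carrier (mod2 A) \<Longrightarrow>
   md_phibar M (C \<otimes>\<^bsub>mod2 A\<^esub> D) = md_phibar M C \<otimes>\<^bsub>B\<^esub> md_phibar M D"
  by (erule mod2_carrierE, erule mod2_carrierE) (simp add: mod2_mult phibar_coset)

lemma phibar_one: "md_phibar M \<one>\<^bsub>mod2 A\<^esub> = \<one>\<^bsub>B\<^esub>"
proof -
  have "\<one>\<^bsub>mod2 A\<^esub> = twoG A #>\<^bsub>A\<^esub> \<one>\<^bsub>A\<^esub>"
    using twoG_sub by (simp add: mod2_def A.coset_join2 subgroup.one_closed)
  then show ?thesis by (simp add: phibar_coset)
qed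

lemma phibar_some: "C \<in> carrier (mod2 A) \<Longrightarrow> md_phibar M C = phi (SOME a. a \<in> C)"
  by (simp add: md_phibar_def)

lemma some_in_coset: "C \<in> carrier (mod2 A) \<Longrightarrow> (SOME a. a \<in> C) \<in> C \<and> (SOME a. a \<in> C) \<in> carrier A"
proof (erule mod2_carrierE)
  fix a assume a: "a \<in> carrier A" "C = twoG A #>\<^bsub>A\<^esub> a"
  have "a \<in> C" using a twoG_sub by (simp add: A.rcos_self)
  then have s: "(SOME a. a \<in> C) \<in> C" by (rule someI)
  moreover have "C \<subseteq> carrier A" using a twoG_sub by (simp add: A.r_coset_subset_G subgroup.subset)
  ultimately show ?thesis by auto
qed

lemma tors2_grp_carrier: "carrier (tors2_grp A) = tors2 A"
  unfolding tors2_grp_def by (rule subgroup.carrier_subgroup_generated_subgroup[OF tors2_sub])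

lemma tors2_grp_group: "group (tors2_grp A)"
  unfolding tors2_grp_def by simp

lemma tors2_grp_mult: "monoid.mult (tors2_grp A) = monoid.mult A"
  unfolding tors2_grp_def by (simp add: subgroup_generated_def)

end

lemma hom_group_carrier: "carrier (hom_group G H) = hom_ext G H"
  by (simp add: hom_group_def)

context xmd2 begin

lemma comm_hom2: "comm_group (hom_group (tors2_grp M.A) (mod2 M'.A))"
  by (rule hom_group_comm[OF M.tors2_grp_group M'.mod2_comm])

lemma comm_homA: "comm_group (hom_group M.A M'.A)"
  by (rule hom_group_comm[OF M.A.is_group M'.A])

lemma emd_mult: "p \<otimes>\<^bsub>emd_group M M'\<^esub> q = (\<lambda>x\<in>carrier M.A. fst p x \<otimes>\<^bsub>M'.A\<^esub> fst q x,
                    \<lambda>y\<in>carrier M.B. snd p y \<otimes>\<^bsub>M'.B\<^esub> snd q y)"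
  by (simp add: emd_group_def)

lemma emd_one: "\<one>\<^bsub>emd_group M M'\<^esub> = (\<lambda>x\<in>carrier M.A. \<one>\<^bsub>M'.A\<^esub>, \<lambda>y\<in>carrier M.B. \<one>\<^bsub>M'.B\<^esub>)"
  by (simp add: emd_group_def)

lemma emd_carrier: "carrier (emd_group M M') = emd_hom M M'"
  by (simp add: emd_group_def)

lemma emd_homI:
  assumes "f \<in> hom M.A M'.A" "g \<in> hom M.B M'.B" "f \<in> extensional (carrier M.A)" "g \<in> extensional (carrier M.B)"
    "\<And>a. a \<in> carrier M.A \<Longrightarrow> g (M.phi a) = M'.phi (f a)"
    "\<And>b. b \<in> carrier M.B \<Longrightarrow> f (M.psi b) = M'.psi (g b)"
  shows "(f,g) \<in> emd_hom M M'"
  using assms by (auto simp: emd_hom_def hom_ext_def)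

lemma comm_emd: "comm_group (emd_group M M')"
proof (rule comm_groupI, goal_cases)
  case (1 p q)
  obtain f1 g1 where p: "p = (f1,g1)" by (cases p)
  obtain f2 g2 where q: "q = (f2,g2)" by (cases q)
  note P1 = emd_homD[of f1 g1] and P2 = emd_homD[of f2 g2]
  have h1: "(f1,g1) \<in> emd_hom M M'" and h2: "(f2,g2) \<in> emd_hom M M'" using 1 p q by (auto simp: emd_carrier)
  show ?case unfolding emd_mult emd_carrier p q fst_conv snd_conv
  proof (rule emd_homI)
    show "(\<lambda>x\<in>carrier M.A. f1 x \<otimes>\<^bsub>M'.A\<^esub> f2 x) \<in> hom M.A M'.A"
      using emd_homD(1)[OF h1] emd_homD(1)[OF h2] by (auto simp: hom_def Pi_def M'.A.m_ac)
    show "(\<lambda>y\<in>carrier M.B. g1 y \<otimes>\<^bsub>M'.B\<^esub> g2 y) \<in> hom M.B M'.B"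
      using emd_homD(2)[OF h1] emd_homD(2)[OF h2] by (auto simp: hom_def Pi_def M'.B.m_ac)
  next
    fix a assume a: "a \<in> carrier M.A"
    then show "(\<lambda>y\<in>carrier M.B. g1 y \<otimes>\<^bsub>M'.B\<^esub> g2 y) (M.phi a) = M'.phi ((\<lambda>x\<in>carrier M.A. f1 x \<otimes>\<^bsub>M'.A\<^esub> f2 x) a)"
      using emd_homD(5)[OF h1 a] emd_homD(5)[OF h2 a] emd_homD(1)[OF h1] emd_homD(1)[OF h2]
      by (simp add: hom_in_carrier)
  next
    fix b assume b: "b \<in> carrier M.B"
    then show "(\<lambda>x\<in>carrier M.A. f1 x \<otimes>\<^bsub>M'.A\<^esub> f2 x) (M.psi b) = M'.psi ((\<lambda>y\<in>carrier M.B. g1 y \<otimes>\<^bsub>M'.B\<^esub> g2 y) b)"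
      using emd_homD(6)[OF h1 b] emd_homD(6)[OF h2 b] emd_homD(2)[OF h1] emd_homD(2)[OF h2]
      by (simp add: hom_in_carrier)
  qed auto
next
  case 2
  show ?case unfolding emd_one emd_carrier
    by (rule emd_homI) (auto simp: hom_def Pi_def M.psi_phi)
next
  case (3 p q r)
  then show ?case unfolding emd_mult emd_carrier
    by (auto simp: emd_hom_def hom_ext_def hom_def Pi_def M'.A.m_assoc M'.B.m_assoc intro!: restrict_ext)
next
  case (4 p q)
  then show ?case unfolding emd_mult emd_carrier
    by (auto simp: emd_hom_def hom_ext_def hom_def Pi_def M'.A.m_comm M'.B.m_comm intro!: restrict_ext)
next
  case (5 p)
  then show ?case unfolding emd_mult emd_one emd_carrier
    by (auto simp: emd_hom_def hom_ext_def hom_def Pi_def extensional_def intro!: ext)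
next
  case (6 p)
  obtain f1 g1 where p: "p = (f1,g1)" by (cases p)
  have h1: "(f1,g1) \<in> emd_hom M M'" using 6 p by (auto simp: emd_carrier)
  note H = emd_homD[OF h1]
  define q where "q = (\<lambda>x\<in>carrier M.A. inv\<^bsub>M'.A\<^esub> f1 x, \<lambda>y\<in>carrier M.B. inv\<^bsub>M'.B\<^esub> g1 y)"
  have "q \<in> emd_hom M M'" unfolding q_def
  proof (rule emd_homI)
    show "(\<lambda>x\<in>carrier M.A. inv\<^bsub>M'.A\<^esub> f1 x) \<in> hom M.A M'.A"
      using H(1) by (auto simp: hom_def Pi_def M'.A.inv_mult_group M'.A.m_comm)
    show "(\<lambda>y\<in>carrier M.B. inv\<^bsub>M'.B\<^esub> g1 y) \<in> hom M.B M'.B"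
      using H(2) by (auto simp: hom_def Pi_def M'.B.inv_mult_group M'.B.m_comm)
  next
    fix a assume a: "a \<in> carrier M.A"
    then show "(\<lambda>y\<in>carrier M.B. inv\<^bsub>M'.B\<^esub> g1 y) (M.phi a) = M'.phi ((\<lambda>x\<in>carrier M.A. inv\<^bsub>M'.A\<^esub> f1 x) a)"
      using H(5)[OF a] H(1) by (simp add: hom_in_carrier)
  next
    fix b assume b: "b \<in> carrier M.B"
    then show "(\<lambda>x\<in>carrier M.A. inv\<^bsub>M'.A\<^esub> f1 x) (M.psi b) = M'.psi ((\<lambda>y\<in>carrier M.B. inv\<^bsub>M'.B\<^esub> g1 y) b)"
      using H(6)[OF b] H(2) by (simp add: hom_in_carrier)
  qed auto
  moreover have "q \<otimes>\<^bsub>emd_group M M'\<^esub> p = \<one>\<^bsub>emd_group M M'\<^esub>"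
    unfolding emd_mult emd_one q_def p using H(1,2)
    by (auto simp: hom_def Pi_def intro!: restrict_ext)
  ultimately show ?case unfolding emd_carrier by blast
qed

lemma iota_mem:
  assumes h: "h \<in> hom_ext (tors2_grp M.A) (mod2 M'.A)"
  shows "emd_iota M M' h \<in> emd_hom M M'"
proof -
  have hh: "h t \<in> carrier (mod2 M'.A)" if "t \<in> tors2 M.A" for t
    using h that M.tors2_grp_carrier by (auto simp: hom_ext_def hom_def Pi_def)
  have hm: "h (s \<otimes>\<^bsub>M.A\<^esub> t) = h s \<otimes>\<^bsub>mod2 M'.A\<^esub> h t" if "s \<in> tors2 M.A" "t \<in> tors2 M.A" for s t
    using h that M.tors2_grp_carrier M.tors2_grp_mult by (auto simp: hom_ext_def hom_def)
  have h1: "h \<one>\<^bsub>M.A\<^esub> = \<one>\<^bsub>mod2 M'.A\<^esub>"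
  proof -
    interpret mm: comm_group "mod2 M'.A" by (rule M'.mod2_comm)
    have o: "\<one>\<^bsub>M.A\<^esub> \<in> tors2 M.A" by (simp add: tors2_def)
    have "h \<one>\<^bsub>M.A\<^esub> \<otimes>\<^bsub>mod2 M'.A\<^esub> h \<one>\<^bsub>M.A\<^esub> = h \<one>\<^bsub>M.A\<^esub> \<otimes>\<^bsub>mod2 M'.A\<^esub> \<one>\<^bsub>mod2 M'.A\<^esub>"
      using hm[OF o o] hh[OF o] by simp
    then show ?thesis using hh[OF o] by (metis mm.l_cancel mm.one_closed)
  qed
  show ?thesis unfolding emd_iota_def
  proof (rule emd_homI)
    show "(\<lambda>x\<in>carrier M.A. \<one>\<^bsub>M'.A\<^esub>) \<in> hom M.A M'.A" by (auto simp: hom_def Pi_def)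
    show "(\<lambda>y\<in>carrier M.B. md_phibar M' (h (M.psi y))) \<in> hom M.B M'.B"
    proof (rule homI)
      fix y assume "y \<in> carrier M.B"
      then show "(\<lambda>y\<in>carrier M.B. md_phibar M' (h (M.psi y))) y \<in> carrier M'.B"
        using hh M.psi_tors M'.phibar_closed by simp
    next
      fix x y assume xy: "x \<in> carrier M.B" "y \<in> carrier M.B"
      then show "(\<lambda>y\<in>carrier M.B. md_phibar M' (h (M.psi y))) (x \<otimes>\<^bsub>M.B\<^esub> y) =
          (\<lambda>y\<in>carrier M.B. md_phibar M' (h (M.psi y))) x \<otimes>\<^bsub>M'.B\<^esub> (\<lambda>y\<in>carrier M.B. md_phibar M' (h (M.psi y))) y"
        using hm[OF M.psi_tors M.psi_tors] hh[OF M.psi_tors] M'.phibar_mult by simp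
    qed
  next
    fix a assume a: "a \<in> carrier M.A"
    then show "(\<lambda>y\<in>carrier M.B. md_phibar M' (h (M.psi y))) (M.phi a) = M'.phi ((\<lambda>x\<in>carrier M.A. \<one>\<^bsub>M'.A\<^esub>) a)"
      by (simp add: M.psi_phi h1 M'.phibar_one)
  next
    fix b assume b: "b \<in> carrier M.B"
    then show "(\<lambda>x\<in>carrier M.A. \<one>\<^bsub>M'.A\<^esub>) (M.psi b) = M'.psi ((\<lambda>y\<in>carrier M.B. md_phibar M' (h (M.psi y))) b)"
      using hh[OF M.psi_tors[OF b]] by (simp add: M'.psi_phibar)
  qed auto
qed

end

context xmd2 begin

lemma hom2_facts:
  assumes h: "h \<in> hom_ext (tors2_grp M.A) (mod2 M'.A)"
  shows "\<And>t. t \<in> tors2 M.A \<Longrightarrow> h t \<in> carrier (mod2 M'.A)"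
    and "h \<in> extensional (tors2 M.A)"
  using h M.tors2_grp_carrier by (auto simp: hom_ext_def hom_def Pi_def)

lemma hom_group_mult: "f \<otimes>\<^bsub>hom_group G H\<^esub> g = (\<lambda>x\<in>carrier G. f x \<otimes>\<^bsub>H\<^esub> g x)"
  by (simp add: hom_group_def)

lemma iota_hom: "emd_iota M M' \<in> hom (hom_group (tors2_grp M.A) (mod2 M'.A)) (emd_group M M')"
proof (rule homI)
  fix h assume "h \<in> carrier (hom_group (tors2_grp M.A) (mod2 M'.A))"
  then show "emd_iota M M' h \<in> carrier (emd_group M M')"
    using iota_mem by (simp add: hom_group_carrier emd_carrier)
next
  fix h1 h2 assume "h1 \<in> carrier (hom_group (tors2_grp M.A) (mod2 M'.A))"
     "h2 \<in> carrier (hom_group (tors2_grp M.A) (mod2 M'.A))"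
  then have h1: "h1 \<in> hom_ext (tors2_grp M.A) (mod2 M'.A)" and h2: "h2 \<in> hom_ext (tors2_grp M.A) (mod2 M'.A)"
    by (simp_all add: hom_group_carrier)
  show "emd_iota M M' (h1 \<otimes>\<^bsub>hom_group (tors2_grp M.A) (mod2 M'.A)\<^esub> h2) =
        emd_iota M M' h1 \<otimes>\<^bsub>emd_group M M'\<^esub> emd_iota M M' h2"
    unfolding emd_iota_def emd_mult hom_group_mult M.tors2_grp_carrier
    using hom2_facts(1)[OF h1] hom2_facts(1)[OF h2] M.psi_tors
    by (auto simp: M'.phibar_mult intro!: restrict_ext)
qed

lemma iota_inj: "inj_on (emd_iota M M') (carrier (hom_group (tors2_grp M.A) (mod2 M'.A)))"
proof (rule inj_onI)
  fix h1 h2 assume "h1 \<in> carrier (hom_group (tors2_grp M.A) (mod2 M'.A))"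
     "h2 \<in> carrier (hom_group (tors2_grp M.A) (mod2 M'.A))"
  then have h1: "h1 \<in> hom_ext (tors2_grp M.A) (mod2 M'.A)" and h2: "h2 \<in> hom_ext (tors2_grp M.A) (mod2 M'.A)"
    by (simp_all add: hom_group_carrier)
  assume eq: "emd_iota M M' h1 = emd_iota M M' h2"
  show "h1 = h2"
  proof (rule extensionalityI[OF hom2_facts(2)[OF h1] hom2_facts(2)[OF h2]])
    fix t assume t: "t \<in> tors2 M.A"
    then obtain b where b: "b \<in> carrier M.B" "M.psi b = t" using M.psi_surj by blast
    have "md_phibar M' (h1 (M.psi b)) = md_phibar M' (h2 (M.psi b))"
      using fun_cong[OF arg_cong[OF eq, of snd], of b] b by (simp add: emd_iota_def)
    then show "h1 t = h2 t" using M'.phibar_inj hom2_facts(1)[OF h1 t] hom2_facts(1)[OF h2 t] b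
      by (auto dest: inj_onD)
  qed
qed

lemma alpha_hom: "md_alpha \<in> hom (emd_group M M') (hom_group M.A M'.A)"
proof (rule homI)
  fix p assume "p \<in> carrier (emd_group M M')"
  then show "md_alpha p \<in> carrier (hom_group M.A M'.A)"
    by (auto simp: emd_carrier hom_group_carrier md_alpha_def emd_hom_def)
next
  fix p q assume "p \<in> carrier (emd_group M M')" "q \<in> carrier (emd_group M M')"
  show "md_alpha (p \<otimes>\<^bsub>emd_group M M'\<^esub> q) = md_alpha p \<otimes>\<^bsub>hom_group M.A M'.A\<^esub> md_alpha q"
    by (simp add: md_alpha_def emd_mult hom_group_mult)
qed

lemma alpha_image: "md_alpha ` carrier (emd_group M M') = carrier (hom_group M.A M'.A)"
proof
  show "md_alpha ` carrier (emd_group M M') \<subseteq> carrier (hom_group M.A M'.A)"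
    by (auto simp: emd_carrier hom_group_carrier md_alpha_def emd_hom_def)
next
  show "carrier (hom_group M.A M'.A) \<subseteq> md_alpha ` carrier (emd_group M M')"
  proof
    fix f assume "f \<in> carrier (hom_group M.A M'.A)"
    then have f: "f \<in> hom_ext M.A M'.A" by (simp add: hom_group_carrier)
    then obtain g where g: "g \<in> hom_ext M.B M'.B" "\<forall>a\<in>carrier M.A. g (M.phi a) = M'.phi (f a)"
       "\<forall>b\<in>carrier M.B. f (M.psi b) = M'.psi (g b)"
      using full[of f] by (auto simp: hom_ext_def)
    have "(f,g) \<in> emd_hom M M'" using f g by (simp add: emd_hom_def)
    then show "f \<in> md_alpha ` carrier (emd_group M M')"
      by (auto simp: emd_carrier md_alpha_def intro!: image_eqI[of _ _ "(f,g)"])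
  qed
qed

lemma iota_kernel: "emd_iota M M' ` carrier (hom_group (tors2_grp M.A) (mod2 M'.A)) =
        kernel (emd_group M M') (hom_group M.A M'.A) md_alpha"
proof
  show "emd_iota M M' ` carrier (hom_group (tors2_grp M.A) (mod2 M'.A)) \<subseteq> kernel (emd_group M M') (hom_group M.A M'.A) md_alpha"
    using iota_mem by (auto simp: kernel_def hom_group_carrier emd_carrier md_alpha_def emd_iota_def hom_group_def)
next
  show "kernel (emd_group M M') (hom_group M.A M'.A) md_alpha \<subseteq> emd_iota M M' ` carrier (hom_group (tors2_grp M.A) (mod2 M'.A))"
  proof
    fix p assume "p \<in> kernel (emd_group M M') (hom_group M.A M'.A) md_alpha"
    then obtain f g where p: "p = (f,g)" "(f,g) \<in> emd_hom M M'" and f1: "f = (\<lambda>x\<in>carrier M.A. \<one>\<^bsub>M'.A\<^esub>)"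
      by (cases p) (auto simp: kernel_def emd_carrier md_alpha_def hom_group_def)
    note H = emd_homD[OF p(2)]
    interpret g: group_hom M.B M'.B g
      by (simp add: group_hom_def group_hom_axioms_def M.B.is_group M'.B.is_group H(2))
    interpret mm: comm_group "mod2 M'.A" by (rule M'.mod2_comm)
    have gker: "M'.psi (g b) = \<one>\<^bsub>M'.A\<^esub>" if "b \<in> carrier M.B" for b
      using H(6)[OF that] f1 that by simp
    have gphi: "g (M.phi a) = \<one>\<^bsub>M'.B\<^esub>" if "a \<in> carrier M.A" for a
      using H(5)[OF that] f1 that by simp
    have gin: "g b \<in> md_phibar M' ` carrier (mod2 M'.A)" if "b \<in> carrier M.B" for b
      using M'.phibar_img gker[OF that] that by (simp add: kernel_def)
    define pinv where "pinv = inv_into (carrier (mod2 M'.A)) (md_phibar M')"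
    define lift where "lift t = (SOME b. b \<in> carrier M.B \<and> M.psi b = t)" for t
    have lift: "lift t \<in> carrier M.B" "M.psi (lift t) = t" if "t \<in> tors2 M.A" for t
    proof -
      have "\<exists>b. b \<in> carrier M.B \<and> M.psi b = t" using M.psi_surj[OF that] by blast
      then have "lift t \<in> carrier M.B \<and> M.psi (lift t) = t" unfolding lift_def by (rule someI_ex)
      then show "lift t \<in> carrier M.B" "M.psi (lift t) = t" by auto
    qed
    have gdep: "g b1 = g b2" if hb1: "b1 \<in> carrier M.B" and hb2: "b2 \<in> carrier M.B" and hp: "M.psi b1 = M.psi b2" for b1 b2
    proof -
      have c: "b1 \<otimes>\<^bsub>M.B\<^esub> inv\<^bsub>M.B\<^esub> b2 \<in> carrier M.B" using hb1 hb2 by simp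
      have "M.psi (b1 \<otimes>\<^bsub>M.B\<^esub> inv\<^bsub>M.B\<^esub> b2) = \<one>\<^bsub>M.A\<^esub>" using hb1 hb2 hp by simp
      then obtain a where a: "a \<in> carrier M.A" "b1 \<otimes>\<^bsub>M.B\<^esub> inv\<^bsub>M.B\<^esub> b2 = M.phi a"
        using M.kerpsi[OF c] by blast
      have eq: "g b1 \<otimes>\<^bsub>M'.B\<^esub> inv\<^bsub>M'.B\<^esub> g b2 = \<one>\<^bsub>M'.B\<^esub>"
        using arg_cong[OF a(2), of g] gphi[OF a(1)] hb1 hb2 by simp
      have "g b1 = (g b1 \<otimes>\<^bsub>M'.B\<^esub> inv\<^bsub>M'.B\<^esub> g b2) \<otimes>\<^bsub>M'.B\<^esub> g b2"
        using hb1 hb2 by (simp add: M'.B.m_assoc)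
      also have "\<dots> = g b2" unfolding eq using hb2 by simp
      finally show ?thesis .
    qed
    define h where "h = (\<lambda>t\<in>tors2 M.A. pinv (g (lift t)))"
    have hval: "h t \<in> carrier (mod2 M'.A)" "md_phibar M' (h t) = g (lift t)" if "t \<in> tors2 M.A" for t
    proof -
      have "g (lift t) \<in> md_phibar M' ` carrier (mod2 M'.A)" using gin lift(1)[OF that] .
      then show "h t \<in> carrier (mod2 M'.A)" "md_phibar M' (h t) = g (lift t)"
        using that by (auto simp: h_def pinv_def inv_into_into f_inv_into_f)
    qed
    have gh: "g b = md_phibar M' (h (M.psi b))" if "b \<in> carrier M.B" for b
      using hval(2)[OF M.psi_tors[OF that]] gdep[OF that lift(1)] lift(2) M.psi_tors[OF that] that by simp
    have hhom: "h \<in> hom_ext (tors2_grp M.A) (mod2 M'.A)"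
      unfolding hom_ext_def M.tors2_grp_carrier[symmetric]
    proof
      show "h \<in> extensional (carrier (tors2_grp M.A))" by (simp add: h_def M.tors2_grp_carrier)
      show "h \<in> hom (tors2_grp M.A) (mod2 M'.A)"
      proof (rule homI)
        fix t assume "t \<in> carrier (tors2_grp M.A)"
        then show "h t \<in> carrier (mod2 M'.A)" using hval by (simp add: M.tors2_grp_carrier)
      next
        fix s t assume "s \<in> carrier (tors2_grp M.A)" "t \<in> carrier (tors2_grp M.A)"
        then have st: "s \<in> tors2 M.A" "t \<in> tors2 M.A" by (simp_all add: M.tors2_grp_carrier)
        have stt: "s \<otimes>\<^bsub>M.A\<^esub> t \<in> tors2 M.A" using st M.tors2_sub by (simp add: subgroup.m_closed)
        have "md_phibar M' (h (s \<otimes>\<^bsub>M.A\<^esub> t)) = g (lift s \<otimes>\<^bsub>M.B\<^esub> lift t)"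
          using gh[of "lift s \<otimes>\<^bsub>M.B\<^esub> lift t"] lift[OF st(1)] lift[OF st(2)] by simp
        also have "\<dots> = md_phibar M' (h s \<otimes>\<^bsub>mod2 M'.A\<^esub> h t)"
          using lift[OF st(1)] lift[OF st(2)] hval[OF st(1)] hval[OF st(2)] M'.phibar_mult by simp
        finally have "h (s \<otimes>\<^bsub>M.A\<^esub> t) = h s \<otimes>\<^bsub>mod2 M'.A\<^esub> h t"
          using M'.phibar_inj hval(1)[OF stt] hval(1)[OF st(1)] hval(1)[OF st(2)]
          by (auto dest: inj_onD)
        then show "h (s \<otimes>\<^bsub>tors2_grp M.A\<^esub> t) = h s \<otimes>\<^bsub>mod2 M'.A\<^esub> h t"
          by (simp add: M.tors2_grp_mult)
      qed
    qed
    have "emd_iota M M' h = (f,g)"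
      unfolding emd_iota_def f1 using gh H(4)
      by (auto intro!: extensionalityI[OF _ H(4)])
    then show "p \<in> emd_iota M M' ` carrier (hom_group (tors2_grp M.A) (mod2 M'.A))"
      using hhom p by (metis hom_group_carrier image_eqI)
  qed
qed

end

definition goodbf :: "'i monoid \<Rightarrow> 'i set \<Rightarrow> ('i \<Rightarrow> 'i \<Rightarrow> 'i) \<Rightarrow> bool" where
  "goodbf G U m \<longleftrightarrow> U \<subseteq> tors2 G \<and> \<one>\<^bsub>G\<^esub> \<in> U \<and> (\<forall>x\<in>U. \<forall>y\<in>U. x \<otimes>\<^bsub>G\<^esub> y \<in> U) \<and>
     (\<forall>x\<in>U. m x x = x) \<and> (\<forall>x\<in>U. \<forall>y\<in>U. m x y \<in> U) \<and>
     (\<forall>x\<in>U. \<forall>y\<in>U. \<forall>z\<in>U. m (x \<otimes>\<^bsub>G\<^esub> y) z = m x z \<otimes>\<^bsub>G\<^esub> m y z) \<and>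
     (\<forall>x\<in>U. \<forall>y\<in>U. \<forall>z\<in>U. m z (x \<otimes>\<^bsub>G\<^esub> y) = m z x \<otimes>\<^bsub>G\<^esub> m z y)"

definition graphbf :: "'i set \<Rightarrow> ('i \<Rightarrow> 'i \<Rightarrow> 'i) \<Rightarrow> (('i \<times> 'i) \<times> 'i) set" where
  "graphbf U m = {((x,y), m x y) | x y. x \<in> U \<and> y \<in> U}"

definition Ug :: "(('i \<times> 'i) \<times> 'i) set \<Rightarrow> 'i set" where
  "Ug \<Gamma> = {x. ((x,x),x) \<in> \<Gamma>}"

locale cg =
  fixes G :: "'i monoid" (structure)
  assumes cg: "comm_group G"
begin

sublocale comm_group G by (rule cg)

definition BF :: "(('i \<times> 'i) \<times> 'i) set set" where
  "BF = {\<Gamma>. \<Gamma> \<subseteq> (tors2 G \<times> tors2 G) \<times> tors2 G \<and>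
     (\<forall>x y z z'. ((x,y),z)\<in>\<Gamma> \<longrightarrow> ((x,y),z')\<in>\<Gamma> \<longrightarrow> z = z') \<and>
     (\<forall>x y z. ((x,y),z)\<in>\<Gamma> \<longrightarrow> x \<in> Ug \<Gamma> \<and> y \<in> Ug \<Gamma> \<and> z \<in> Ug \<Gamma>) \<and>
     (\<forall>x y. x \<in> Ug \<Gamma> \<longrightarrow> y \<in> Ug \<Gamma> \<longrightarrow> (\<exists>z. ((x,y),z)\<in>\<Gamma>)) \<and>
     \<one> \<in> Ug \<Gamma> \<and>
     (\<forall>x y. x \<in> Ug \<Gamma> \<longrightarrow> y \<in> Ug \<Gamma> \<longrightarrow> x \<otimes> y \<in> Ug \<Gamma>) \<and>
     (\<forall>x y z p q. ((x,z),p)\<in>\<Gamma> \<longrightarrow> ((y,z),q)\<in>\<Gamma> \<longrightarrow> ((x \<otimes> y,z),p \<otimes> q)\<in>\<Gamma>) \<and>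
     (\<forall>x y z p q. ((z,x),p)\<in>\<Gamma> \<longrightarrow> ((z,y),q)\<in>\<Gamma> \<longrightarrow> ((z,x \<otimes> y),p \<otimes> q)\<in>\<Gamma>)}"

lemma B1: assumes "\<Gamma> \<in> BF" shows "\<Gamma> \<subseteq> (tors2 G \<times> tors2 G) \<times> tors2 G"
  using assms unfolding BF_def mem_Collect_eq by (elim conjE) metis

lemma B2: assumes "\<Gamma> \<in> BF" shows "\<And>x y z z'. ((x,y),z)\<in>\<Gamma> \<Longrightarrow> ((x,y),z')\<in>\<Gamma> \<Longrightarrow> z = z'"
  using assms unfolding BF_def mem_Collect_eq by (elim conjE) metis

lemma B3: assumes "\<Gamma> \<in> BF" shows "\<And>x y z. ((x,y),z)\<in>\<Gamma> \<Longrightarrow> x \<in> Ug \<Gamma> \<and> y \<in> Ug \<Gamma> \<and> z \<in> Ug \<Gamma>"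
  using assms unfolding BF_def mem_Collect_eq by (elim conjE) metis

lemma B4: assumes "\<Gamma> \<in> BF" shows "\<And>x y. x \<in> Ug \<Gamma> \<Longrightarrow> y \<in> Ug \<Gamma> \<Longrightarrow> (\<exists>z. ((x,y),z)\<in>\<Gamma>)"
  using assms unfolding BF_def mem_Collect_eq by (elim conjE) metis

lemma B5: assumes "\<Gamma> \<in> BF" shows "\<one> \<in> Ug \<Gamma>"
  using assms unfolding BF_def mem_Collect_eq by (elim conjE) metis

lemma B6: assumes "\<Gamma> \<in> BF" shows "\<And>x y. x \<in> Ug \<Gamma> \<Longrightarrow> y \<in> Ug \<Gamma> \<Longrightarrow> x \<otimes> y \<in> Ug \<Gamma>"
  using assms unfolding BF_def mem_Collect_eq by (elim conjE) metis

lemma B7: assumes "\<Gamma> \<in> BF" shows "\<And>x y z p q. ((x,z),p)\<in>\<Gamma> \<Longrightarrow> ((y,z),q)\<in>\<Gamma> \<Longrightarrow> ((x \<otimes> y,z),p \<otimes> q)\<in>\<Gamma>"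
  using assms unfolding BF_def mem_Collect_eq by (elim conjE) metis

lemma B8: assumes "\<Gamma> \<in> BF" shows "\<And>x y z p q. ((z,x),p)\<in>\<Gamma> \<Longrightarrow> ((z,y),q)\<in>\<Gamma> \<Longrightarrow> ((z,x \<otimes> y),p \<otimes> q)\<in>\<Gamma>"
  using assms unfolding BF_def mem_Collect_eq by (elim conjE) metis

lemmas BF_D = B1 B2 B3 B4 B5 B6 B7 B8

lemma Ug_mono: "\<Gamma> \<subseteq> \<Delta> \<Longrightarrow> Ug \<Gamma> \<subseteq> Ug \<Delta>"
  by (auto simp: Ug_def)

lemma Ug_Union: "Ug (\<Union>C) = (\<Union>\<Gamma>\<in>C. Ug \<Gamma>)"
  by (auto simp: Ug_def)

lemma graph_BF:
  assumes g: "goodbf G U m"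
  shows "graphbf U m \<in> BF" and "Ug (graphbf U m) = U"
proof -
  have U: "U \<subseteq> tors2 G" "\<one> \<in> U" "\<And>x y. x\<in>U \<Longrightarrow> y\<in>U \<Longrightarrow> x \<otimes> y \<in> U"
    "\<And>x. x\<in>U \<Longrightarrow> m x x = x" "\<And>x y. x\<in>U \<Longrightarrow> y\<in>U \<Longrightarrow> m x y \<in> U"
    "\<And>x y z. x\<in>U \<Longrightarrow> y\<in>U \<Longrightarrow> z\<in>U \<Longrightarrow> m (x \<otimes> y) z = m x z \<otimes> m y z"
    "\<And>x y z. x\<in>U \<Longrightarrow> y\<in>U \<Longrightarrow> z\<in>U \<Longrightarrow> m z (x \<otimes> y) = m z x \<otimes> m z y"
    using g unfolding goodbf_def by blast+
  have mem: "((x,y),z) \<in> graphbf U m \<longleftrightarrow> x \<in> U \<and> y \<in> U \<and> z = m x y" for x y z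
    by (auto simp: graphbf_def)
  show UG: "Ug (graphbf U m) = U"
    using U(4) by (auto simp: Ug_def mem)
  show "graphbf U m \<in> BF"
    unfolding BF_def mem_Collect_eq UG
  proof (intro conjI allI impI)
    show "graphbf U m \<subseteq> (tors2 G \<times> tors2 G) \<times> tors2 G"
      using U(1) U(5) by (auto simp: graphbf_def)
  qed (auto simp: mem U)
qed

lemma BF_graph:
  assumes GB: "\<Gamma> \<in> BF"
  shows "goodbf G (Ug \<Gamma>) (\<lambda>x y. THE z. ((x,y),z) \<in> \<Gamma>) \<and> \<Gamma> = graphbf (Ug \<Gamma>) (\<lambda>x y. THE z. ((x,y),z) \<in> \<Gamma>)"
proof -
  define m where "m = (\<lambda>x y. THE z. ((x,y),z) \<in> \<Gamma>)"
  note B = BF_D[OF GB]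
  have mv: "m x y = z" if "((x,y),z) \<in> \<Gamma>" for x y z
    unfolding m_def using that B(2) by blast
  have mm: "((x,y), m x y) \<in> \<Gamma>" if "x \<in> Ug \<Gamma>" "y \<in> Ug \<Gamma>" for x y
    using B(4)[OF that] mv by blast
  have UV: "Ug \<Gamma> \<subseteq> tors2 G" using B(1) by (auto simp: Ug_def)
  have "goodbf G (Ug \<Gamma>) m" unfolding goodbf_def
  proof (intro conjI ballI)
    show "Ug \<Gamma> \<subseteq> tors2 G" by (fact UV)
    show "\<one> \<in> Ug \<Gamma>" by (fact B(5))
  next
    fix x y assume "x \<in> Ug \<Gamma>" "y \<in> Ug \<Gamma>" then show "x \<otimes> y \<in> Ug \<Gamma>" by (rule B(6))
  next
    fix x assume "x \<in> Ug \<Gamma>" then show "m x x = x" by (simp add: Ug_def mv)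
  next
    fix x y assume "x \<in> Ug \<Gamma>" "y \<in> Ug \<Gamma>" then show "m x y \<in> Ug \<Gamma>" using mm B(3) by blast
  next
    fix x y z assume "x \<in> Ug \<Gamma>" "y \<in> Ug \<Gamma>" "z \<in> Ug \<Gamma>"
    then show "m (x \<otimes> y) z = m x z \<otimes> m y z" using mm B(7) mv by blast
  next
    fix x y z assume "x \<in> Ug \<Gamma>" "y \<in> Ug \<Gamma>" "z \<in> Ug \<Gamma>"
    then show "m z (x \<otimes> y) = m z x \<otimes> m z y" using mm B(8) mv by blast
  qed
  moreover have "\<Gamma> = graphbf (Ug \<Gamma>) m"
  proof
    show "\<Gamma> \<subseteq> graphbf (Ug \<Gamma>) m"
    proof
      fix e assume e: "e \<in> \<Gamma>"
      obtain x y z where exyz: "e = ((x,y),z)" by (cases e) auto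
      then show "e \<in> graphbf (Ug \<Gamma>) m" using e B(3) mv by (auto simp: graphbf_def)
    qed
    show "graphbf (Ug \<Gamma>) m \<subseteq> \<Gamma>" using mm by (auto simp: graphbf_def)
  qed
  ultimately show ?thesis by (simp add: m_def)
qed


lemma tors2_carrier: "x \<in> tors2 G \<Longrightarrow> x \<in> carrier G" by (simp add: tors2_def)
lemma tors2_sq: "x \<in> tors2 G \<Longrightarrow> x \<otimes> x = \<one>" by (simp add: tors2_def)

lemma ext_step:
  assumes g: "goodbf G U m" and t: "t \<in> tors2 G" "t \<notin> U"
  shows "\<exists>U' m'. goodbf G U' m' \<and> graphbf U m \<subseteq> graphbf U' m' \<and> t \<in> U'"
proof -
  have U: "U \<subseteq> tors2 G" "\<one> \<in> U" "\<And>x y. x\<in>U \<Longrightarrow> y\<in>U \<Longrightarrow> x \<otimes> y \<in> U"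
    "\<And>x. x\<in>U \<Longrightarrow> m x x = x" "\<And>x y. x\<in>U \<Longrightarrow> y\<in>U \<Longrightarrow> m x y \<in> U"
    "\<And>x y z. x\<in>U \<Longrightarrow> y\<in>U \<Longrightarrow> z\<in>U \<Longrightarrow> m (x \<otimes> y) z = m x z \<otimes> m y z"
    "\<And>x y z. x\<in>U \<Longrightarrow> y\<in>U \<Longrightarrow> z\<in>U \<Longrightarrow> m z (x \<otimes> y) = m z x \<otimes> m z y"
    using g unfolding goodbf_def by blast+
  have Uc: "x \<in> U \<Longrightarrow> x \<in> carrier G" for x using U(1) tors2_carrier by blast
  have Usq: "x \<in> U \<Longrightarrow> x \<otimes> x = \<one>" for x using U(1) tors2_sq by blast
  have tc: "t \<in> carrier G" using t tors2_carrier by blast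
  have tt: "t \<otimes> t = \<one>" using t tors2_sq by blast
  have tt2: "t \<otimes> (t \<otimes> w) = w" if "w \<in> carrier G" for w
    using that tc tt by (simp add: m_assoc[symmetric])
  have tU: "t \<otimes> u \<notin> U" if "u \<in> U" for u
  proof
    assume "t \<otimes> u \<in> U"
    then have "(t \<otimes> u) \<otimes> u \<in> U" using U(3) that by blast
    moreover have "(t \<otimes> u) \<otimes> u = t" using tc Uc[OF that] Usq[OF that] by (simp add: m_assoc)
    ultimately show False using t by simp
  qed
  define U' where "U' = U \<union> (\<lambda>u. t \<otimes> u) ` U"
  define lo where "lo x = (if x \<in> U then x else t \<otimes> x)" for x
  define hi where "hi x = (x \<notin> U)" for x
  define tp where "tp b = (if b then t else \<one>)" for b
  have tpc: "tp b \<in> carrier G" for b using tc by (simp add: tp_def)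
  have tpx: "tp (a \<noteq> b) = tp a \<otimes> tp b" for a b using tc tt by (simp add: tp_def)
  have lo_U: "lo x \<in> U" if "x \<in> U'" for x
    using that Uc tt2 by (auto simp: lo_def U'_def)
  have dec: "x = tp (hi x) \<otimes> lo x" if "x \<in> U'" for x
    using that Uc tt2 tc by (auto simp: lo_def hi_def tp_def U'_def)
  have U'c: "x \<in> U' \<Longrightarrow> x \<in> carrier G" for x using Uc tc by (auto simp: U'_def)
  have tpU': "tp b \<otimes> u \<in> U'" if "u \<in> U" for b u
    using that Uc by (auto simp: tp_def U'_def)
  have hi_tp: "hi (tp b \<otimes> u) = b" if "u \<in> U" for b u
    using that Uc tU by (auto simp: tp_def hi_def)
  have lo_tp: "lo (tp b \<otimes> u) = u" if "u \<in> U" for b u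
    using that Uc tU tt2 by (auto simp: tp_def lo_def)
  have mult_dec: "x \<otimes> y = tp (hi x \<noteq> hi y) \<otimes> (lo x \<otimes> lo y)" if "x \<in> U'" "y \<in> U'" for x y
  proof -
    have "x \<otimes> y = (tp (hi x) \<otimes> lo x) \<otimes> (tp (hi y) \<otimes> lo y)" using dec that by metis
    also have "\<dots> = (tp (hi x) \<otimes> tp (hi y)) \<otimes> (lo x \<otimes> lo y)"
      using tpc Uc lo_U that by (simp add: m_ac)
    finally show ?thesis by (simp only: tpx)
  qed
  have U'mult: "x \<otimes> y \<in> U'" and lo_mult: "lo (x \<otimes> y) = lo x \<otimes> lo y"
    and hi_mult: "hi (x \<otimes> y) = (hi x \<noteq> hi y)" if "x \<in> U'" "y \<in> U'" for x y
  proof -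
    have u: "lo x \<otimes> lo y \<in> U" using U(3) lo_U that by blast
    show "x \<otimes> y \<in> U'" "lo (x \<otimes> y) = lo x \<otimes> lo y" "hi (x \<otimes> y) = (hi x \<noteq> hi y)"
      unfolding mult_dec[OF that] using tpU'[OF u] lo_tp[OF u] hi_tp[OF u] by auto
  qed
  define m' where "m' x y = tp (hi x \<and> hi y) \<otimes> m (lo x) (lo y)" for x y
  have mc: "m u v \<in> carrier G" if "u \<in> U" "v \<in> U" for u v using U(5)[OF that] Uc by blast
  have good': "goodbf G U' m'" unfolding goodbf_def
  proof (intro conjI ballI)
    show "U' \<subseteq> tors2 G"
    proof
      fix x assume x: "x \<in> U'"
      show "x \<in> tors2 G"
      proof (cases "x \<in> U")
        case True then show ?thesis using U(1) by blast
      next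
        case False
        then obtain u where u: "u \<in> U" "x = t \<otimes> u" using x by (auto simp: U'_def)
        have "x \<otimes> x = (t \<otimes> t) \<otimes> (u \<otimes> u)" using u tc Uc by (simp add: m_ac)
        then show ?thesis using u tc Uc tt Usq by (simp add: tors2_def)
      qed
    qed
    show "\<one> \<in> U'" using U(2) by (simp add: U'_def)
  next
    fix x y assume "x \<in> U'" "y \<in> U'" then show "x \<otimes> y \<in> U'" by (rule U'mult)
  next
    fix x assume x: "x \<in> U'"
    have "m' x x = tp (hi x) \<otimes> lo x" using U(4)[OF lo_U[OF x]] by (simp add: m'_def)
    then show "m' x x = x" using dec[OF x] by simp
  next
    fix x y assume "x \<in> U'" "y \<in> U'"
    then show "m' x y \<in> U'" unfolding m'_def using tpU' U(5) lo_U by blast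
  next
    fix x y z assume xyz: "x \<in> U'" "y \<in> U'" "z \<in> U'"
    have l: "lo x \<in> U" "lo y \<in> U" "lo z \<in> U" using lo_U xyz by auto
    have "m' (x \<otimes> y) z = tp ((hi x \<and> hi z) \<noteq> (hi y \<and> hi z)) \<otimes> (m (lo x) (lo z) \<otimes> m (lo y) (lo z))"
      unfolding m'_def hi_mult[OF xyz(1,2)] lo_mult[OF xyz(1,2)] U(6)[OF l]
      by (rule arg_cong2[where f="(\<otimes>)"], rule arg_cong[where f=tp]) auto
    also have "\<dots> = m' x z \<otimes> m' y z"
      unfolding m'_def tpx using tpc mc l by (simp add: m_ac)
    finally show "m' (x \<otimes> y) z = m' x z \<otimes> m' y z" .
  next
    fix x y z assume xyz: "x \<in> U'" "y \<in> U'" "z \<in> U'"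
    have l: "lo x \<in> U" "lo y \<in> U" "lo z \<in> U" using lo_U xyz by auto
    have "m' z (x \<otimes> y) = tp ((hi z \<and> hi x) \<noteq> (hi z \<and> hi y)) \<otimes> (m (lo z) (lo x) \<otimes> m (lo z) (lo y))"
      unfolding m'_def hi_mult[OF xyz(1,2)] lo_mult[OF xyz(1,2)] U(7)[OF l]
      by (rule arg_cong2[where f="(\<otimes>)"], rule arg_cong[where f=tp]) auto
    also have "\<dots> = m' z x \<otimes> m' z y"
      unfolding m'_def tpx using tpc mc l by (simp add: m_ac)
    finally show "m' z (x \<otimes> y) = m' z x \<otimes> m' z y" .
  qed
  have "graphbf U m \<subseteq> graphbf U' m'"
  proof
    fix e assume "e \<in> graphbf U m"
    then obtain x y where e: "e = ((x,y), m x y)" "x \<in> U" "y \<in> U" by (auto simp: graphbf_def)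
    have "m' x y = m x y" using e(2,3) mc[OF e(2,3)] by (simp add: m'_def hi_def lo_def tp_def)
    then show "e \<in> graphbf U' m'" using e by (auto simp: graphbf_def U'_def)
  qed
  moreover have "t \<in> U'" using U(2) tc by (force simp: U'_def)
  ultimately show ?thesis using good' by blast
qed


lemma exists_bf: "\<exists>m. goodbf G (tors2 G) m"
proof -
  have g0: "goodbf G {\<one>} (\<lambda>_ _. \<one>)" by (simp add: goodbf_def tors2_def)
  have "\<exists>\<Gamma>\<in>BF. \<forall>Y\<in>BF. \<Gamma> \<subseteq> Y \<longrightarrow> Y = \<Gamma>"
  proof (rule Zorn_Lemma2, intro ballI)
    fix C assume C: "C \<in> chains BF"
    show "\<exists>U\<in>BF. \<forall>Z\<in>C. Z \<subseteq> U"
    proof (cases "C = {}")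
      case True then show ?thesis using graph_BF(1)[OF g0] by auto
    next
      case False
      have CF: "C \<subseteq> BF" and ch: "\<And>Y Z. Y \<in> C \<Longrightarrow> Z \<in> C \<Longrightarrow> Y \<subseteq> Z \<or> Z \<subseteq> Y"
        using C by (auto simp: chains_def chain_subset_def)
      have UgU: "x \<in> Ug (\<Union>C) \<longleftrightarrow> (\<exists>Y\<in>C. x \<in> Ug Y)" for x by (auto simp: Ug_def)
      have two: "\<exists>Y\<in>C. a \<in> Y \<and> b \<in> Y" if hab: "a \<in> \<Union>C" "b \<in> \<Union>C" for a b
      proof -
        obtain Y1 Y2 where Y: "Y1 \<in> C" "Y2 \<in> C" "a \<in> Y1" "b \<in> Y2" using hab by auto
        have "Y1 \<subseteq> Y2 \<or> Y2 \<subseteq> Y1" using ch[OF Y(1,2)] .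
        then show ?thesis using Y by blast
      qed
      have twoU: "\<exists>Y\<in>C. a \<in> Ug Y \<and> b \<in> Ug Y" if hab: "a \<in> Ug (\<Union>C)" "b \<in> Ug (\<Union>C)" for a b
      proof -
        obtain Y1 Y2 where Y: "Y1 \<in> C" "Y2 \<in> C" "a \<in> Ug Y1" "b \<in> Ug Y2" using hab UgU by auto
        have "Y1 \<subseteq> Y2 \<or> Y2 \<subseteq> Y1" using ch[OF Y(1,2)] .
        then show ?thesis using Y Ug_mono[of Y1 Y2] Ug_mono[of Y2 Y1] by blast
      qed
      have "\<Union>C \<in> BF" unfolding BF_def mem_Collect_eq
      proof (intro conjI allI impI)
        show "\<Union>C \<subseteq> (tors2 G \<times> tors2 G) \<times> tors2 G" using CF B1 by blast
      next
        fix x y z z' assume "((x,y),z) \<in> \<Union>C" "((x,y),z') \<in> \<Union>C"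
        then obtain Y where "Y \<in> C" "((x,y),z) \<in> Y" "((x,y),z') \<in> Y" using two by blast
        then show "z = z'" using CF B2 by blast
      next
        fix x y z assume "((x,y),z) \<in> \<Union>C"
        then obtain Y where Y: "Y \<in> C" "((x,y),z) \<in> Y" by auto
        then have "x \<in> Ug Y \<and> y \<in> Ug Y \<and> z \<in> Ug Y" using CF B3 by blast
        then show "x \<in> Ug (\<Union>C)" using Y UgU by blast
      next
        fix x y z assume "((x,y),z) \<in> \<Union>C"
        then obtain Y where Y: "Y \<in> C" "((x,y),z) \<in> Y" by auto
        then have "x \<in> Ug Y \<and> y \<in> Ug Y \<and> z \<in> Ug Y" using CF B3 by blast
        then show "y \<in> Ug (\<Union>C)" using Y UgU by blast
      next
        fix x y z assume "((x,y),z) \<in> \<Union>C"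
        then obtain Y where Y: "Y \<in> C" "((x,y),z) \<in> Y" by auto
        then have "x \<in> Ug Y \<and> y \<in> Ug Y \<and> z \<in> Ug Y" using CF B3 by blast
        then show "z \<in> Ug (\<Union>C)" using Y UgU by blast

      next
        fix x y assume "x \<in> Ug (\<Union>C)" "y \<in> Ug (\<Union>C)"
        then obtain Y where Y: "Y \<in> C" "x \<in> Ug Y" "y \<in> Ug Y" using twoU by blast
        then obtain z where "((x,y),z) \<in> Y" using CF B4 by blast
        then show "\<exists>z. ((x,y),z) \<in> \<Union>C" using Y by blast
      next
        obtain Y where "Y \<in> C" using False by blast
        then show "\<one> \<in> Ug (\<Union>C)" using CF B5 UgU by blast
      next
        fix x y assume "x \<in> Ug (\<Union>C)" "y \<in> Ug (\<Union>C)"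
        then obtain Y where Y: "Y \<in> C" "x \<in> Ug Y" "y \<in> Ug Y" using twoU by blast
        then have "x \<otimes> y \<in> Ug Y" using CF B6 by blast
        then show "x \<otimes> y \<in> Ug (\<Union>C)" using Y UgU by blast
      next
        fix x y z p q assume "((x,z),p) \<in> \<Union>C" "((y,z),q) \<in> \<Union>C"
        then obtain Y where Y: "Y \<in> C" "((x,z),p) \<in> Y" "((y,z),q) \<in> Y" using two by blast
        then have "((x \<otimes> y,z),p \<otimes> q) \<in> Y" using CF B7 by blast
        then show "((x \<otimes> y,z),p \<otimes> q) \<in> \<Union>C" using Y by blast
      next
        fix x y z p q assume "((z,x),p) \<in> \<Union>C" "((z,y),q) \<in> \<Union>C"
        then obtain Y where Y: "Y \<in> C" "((z,x),p) \<in> Y" "((z,y),q) \<in> Y" using two by blast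
        then have "((z,x \<otimes> y),p \<otimes> q) \<in> Y" using CF B8 by blast
        then show "((z,x \<otimes> y),p \<otimes> q) \<in> \<Union>C" using Y by blast
      qed
      then show ?thesis by auto
    qed
  qed
  then obtain \<Gamma> where GB: "\<Gamma> \<in> BF" and max: "\<And>Y. Y \<in> BF \<Longrightarrow> \<Gamma> \<subseteq> Y \<Longrightarrow> Y = \<Gamma>" by blast
  define m where "m = (\<lambda>x y. THE z. ((x,y),z) \<in> \<Gamma>)"
  have gm: "goodbf G (Ug \<Gamma>) m" and Geq: "\<Gamma> = graphbf (Ug \<Gamma>) m"
    using BF_graph[OF GB] by (simp_all add: m_def)
  have "Ug \<Gamma> = tors2 G"
  proof (rule ccontr)
    assume ne: "Ug \<Gamma> \<noteq> tors2 G"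
    have "Ug \<Gamma> \<subseteq> tors2 G" using gm by (simp add: goodbf_def)
    then obtain t where t: "t \<in> tors2 G" "t \<notin> Ug \<Gamma>" using ne by blast
    obtain U' m' where g': "goodbf G U' m'" and sub: "graphbf (Ug \<Gamma>) m \<subseteq> graphbf U' m'" and tU: "t \<in> U'"
      using ext_step[OF gm t] by blast
    have "graphbf U' m' = \<Gamma>" using max[OF graph_BF(1)[OF g']] sub Geq by simp
    then have "Ug \<Gamma> = U'" using graph_BF(2)[OF g'] by simp
    then show False using t tU by simp
  qed
  then show ?thesis using gm by metis
qed

end

lemma naturality:
  fixes N :: "('e,'f) md" and M :: "('a,'b) md" and M' :: "('c,'d) md" and N' :: "('g,'h) md"
  assumes eN: "exact_md N" and eM: "exact_md M" and eM': "exact_md M'" and eN': "exact_md N'"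
    and uv: "(u,v) \<in> emd_hom N M" and uv': "(u',v') \<in> emd_hom M' N'"
    and h: "h \<in> carrier (hom_group (tors2_grp (md_A M)) (mod2 (md_A M')))"
  shows "emd_comp N (u', v') (emd_comp N (emd_iota M M' h) (u, v)) =
        emd_iota N N' (hom2_map (md_A N) u (md_A M') (md_A N') u' h)"
proof -
  interpret N: xmd N by (rule xmd.intro[OF eN])
  interpret M: xmd M by (rule xmd.intro[OF eM])
  interpret M': xmd M' by (rule xmd.intro[OF eM'])
  interpret N': xmd N' by (rule xmd.intro[OF eN'])
  interpret NM: xmd2 N M by (intro_locales)
  interpret MN': xmd2 M' N' by (intro_locales)
  interpret MM': xmd2 M M' by (intro_locales)
  note U = NM.emd_homD[OF uv] and U' = MN'.emd_homD[OF uv']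
  have hh: "h \<in> hom_ext (tors2_grp M.A) (mod2 M'.A)" using h by (simp add: hom_group_carrier)
  note hf = MM'.hom2_facts[OF hh]
  have c1: "compose (carrier N.A) u' (compose (carrier N.A) (\<lambda>x\<in>carrier M.A. \<one>\<^bsub>M'.A\<^esub>) u) =
      (\<lambda>x\<in>carrier N.A. \<one>\<^bsub>N'.A\<^esub>)"
  proof -
    interpret u': group_hom M'.A N'.A u'
      by (simp add: group_hom_def group_hom_axioms_def M'.A.is_group N'.A.is_group U'(1))
    show ?thesis using U(1) by (auto simp: compose_def hom_in_carrier intro!: restrict_ext)
  qed
  have c2pt: "v' ((\<lambda>y\<in>carrier M.B. md_phibar M' (h (M.psi y))) (v y))
        = md_phibar N' (hom2_map N.A u M'.A N'.A u' h (N.psi y))" if y: "y \<in> carrier N.B" for y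
  proof -
    have vy: "v y \<in> carrier M.B" using U(2) y by (simp add: hom_in_carrier)
    have t: "N.psi y \<in> tors2 N.A" using N.psi_tors[OF y] .
    have ut: "u (N.psi y) = M.psi (v y)" using U(6)[OF y] .
    define C where "C = h (M.psi (v y))"
    have C: "C \<in> carrier (mod2 M'.A)" using hf(1)[OF M.psi_tors[OF vy]] by (simp add: C_def)
    define s where "s = (SOME a. a \<in> C)"
    have s: "s \<in> carrier M'.A" using M'.some_in_coset[OF C] by (simp add: s_def)
    have "v' ((\<lambda>y\<in>carrier M.B. md_phibar M' (h (M.psi y))) (v y))
        = v' (md_phibar M' C)" using y vy by (simp add: C_def)
    also have "\<dots> = v' (M'.phi s)" using C by (simp add: M'.phibar_some s_def)
    also have "\<dots> = N'.phi (u' s)" using U'(5)[OF s] .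
    also have "\<dots> = md_phibar N' (twoG N'.A #>\<^bsub>N'.A\<^esub> u' s)"
      using U'(1) s by (simp add: N'.phibar_coset hom_in_carrier)
    also have "twoG N'.A #>\<^bsub>N'.A\<^esub> u' s = hom2_map N.A u M'.A N'.A u' h (N.psi y)"
      using t C ut by (simp add: hom2_map_def N.tors2_grp_carrier mod2_map_def C_def s_def)
    finally show ?thesis .
  qed
  have c2: "compose (carrier N.B) v' (compose (carrier N.B) (\<lambda>y\<in>carrier M.B. md_phibar M' (h (M.psi y))) v) =
      (\<lambda>y\<in>carrier N.B. md_phibar N' (hom2_map N.A u M'.A N'.A u' h (N.psi y)))"
    using c2pt by (auto simp: compose_def intro!: restrict_ext)
  show ?thesis unfolding emd_comp_def emd_iota_def fst_conv snd_conv c1 c2 ..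
qed

lemma naturality2:
  "md_alpha (emd_comp N (u', v') (emd_comp N p (u, v))) =
        compose (carrier (md_A N)) u' (compose (carrier (md_A N)) (md_alpha p) u)"
  by (simp add: md_alpha_def emd_comp_def)

definition transp :: "('a \<Rightarrow> 'b) \<Rightarrow> 'a monoid \<Rightarrow> 'b monoid" where
  "transp e H = \<lparr>carrier = e ` carrier H,
     monoid.mult = (\<lambda>x y. e (inv_into (carrier H) e x \<otimes>\<^bsub>H\<^esub> inv_into (carrier H) e y)),
     one = e \<one>\<^bsub>H\<^esub>\<rparr>"

lemma transp:
  assumes H: "comm_group H" and inj: "inj_on e (carrier H)"
  shows "comm_group (transp e H)" and "e \<in> hom H (transp e H)"
    and "inv_into (carrier H) e \<in> hom (transp e H) H"
proof -
  interpret H: comm_group H by (rule H)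
  let ?T = "transp e H" and ?i = "inv_into (carrier H) e"
  have car: "carrier ?T = e ` carrier H" by (simp add: transp_def)
  have mul: "x \<otimes>\<^bsub>?T\<^esub> y = e (?i x \<otimes>\<^bsub>H\<^esub> ?i y)" for x y by (simp add: transp_def)
  have one: "\<one>\<^bsub>?T\<^esub> = e \<one>\<^bsub>H\<^esub>" by (simp add: transp_def)
  have ie: "?i (e a) = a" if "a \<in> carrier H" for a using inj that by simp
  have emul: "e a \<otimes>\<^bsub>?T\<^esub> e b = e (a \<otimes>\<^bsub>H\<^esub> b)" if "a \<in> carrier H" "b \<in> carrier H" for a b
    using that by (simp add: mul ie)
  show "comm_group ?T"
  proof (rule comm_groupI)
    fix x y assume "x \<in> carrier ?T" "y \<in> carrier ?T"
    then show "x \<otimes>\<^bsub>?T\<^esub> y \<in> carrier ?T" unfolding car by (auto simp: emul)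
  next
    show "\<one>\<^bsub>?T\<^esub> \<in> carrier ?T" by (simp add: car one)
  next
    fix x y z assume "x \<in> carrier ?T" "y \<in> carrier ?T" "z \<in> carrier ?T"
    then show "x \<otimes>\<^bsub>?T\<^esub> y \<otimes>\<^bsub>?T\<^esub> z = x \<otimes>\<^bsub>?T\<^esub> (y \<otimes>\<^bsub>?T\<^esub> z)"
      unfolding car by (auto simp: emul H.m_assoc)
  next
    fix x y assume "x \<in> carrier ?T" "y \<in> carrier ?T"
    then show "x \<otimes>\<^bsub>?T\<^esub> y = y \<otimes>\<^bsub>?T\<^esub> x"
      unfolding car by (auto simp: emul H.m_comm)
  next
    fix x assume "x \<in> carrier ?T"
    then show "\<one>\<^bsub>?T\<^esub> \<otimes>\<^bsub>?T\<^esub> x = x" unfolding car by (auto simp: one emul)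
  next
    fix x assume "x \<in> carrier ?T"
    then obtain a where a: "a \<in> carrier H" "x = e a" unfolding car by blast
    then have "e (inv\<^bsub>H\<^esub> a) \<otimes>\<^bsub>?T\<^esub> x = \<one>\<^bsub>?T\<^esub>" by (simp add: emul one)
    moreover have "e (inv\<^bsub>H\<^esub> a) \<in> carrier ?T" using a by (simp add: car)
    ultimately show "\<exists>y\<in>carrier ?T. y \<otimes>\<^bsub>?T\<^esub> x = \<one>\<^bsub>?T\<^esub>" by blast
  qed
  show "e \<in> hom H ?T"
    by (rule homI) (auto simp: car emul)
  show "?i \<in> hom ?T H"
  proof (rule homI)
    fix x assume "x \<in> carrier ?T" then show "?i x \<in> carrier H" unfolding car by (auto simp: ie)
  next
    fix x y assume "x \<in> carrier ?T" "y \<in> carrier ?T"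
    then show "?i (x \<otimes>\<^bsub>?T\<^esub> y) = ?i x \<otimes>\<^bsub>H\<^esub> ?i y" unfolding car by (auto simp: emul ie)
  qed
qed

lemma transp_carrier: "carrier (transp e H) = e ` carrier H" by (simp add: transp_def)

lemma transp_mult: "inj_on e (carrier H) \<Longrightarrow> a \<in> carrier H \<Longrightarrow> b \<in> carrier H \<Longrightarrow>
   e a \<otimes>\<^bsub>transp e H\<^esub> e b = e (a \<otimes>\<^bsub>H\<^esub> b)"
  by (simp add: transp_def)

context cg begin

lemma twoG_sub: "subgroup (twoG G) G"
proof (rule subgroupI)
  show "twoG G \<subseteq> carrier G" by (auto simp: twoG_def)
  show "twoG G \<noteq> {}" using one_closed unfolding twoG_def by force
next
  fix x assume "x \<in> twoG G"
  then obtain y where y: "y \<in> carrier G" "x = y \<otimes> y" by (auto simp: twoG_def)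
  then have "inv x = inv y \<otimes> inv y" by (simp add: inv_mult_group)
  then show "inv x \<in> twoG G" using y by (auto simp: twoG_def)
next
  fix x y assume "x \<in> twoG G" "y \<in> twoG G"
  then obtain u v where "u \<in> carrier G" "x = u \<otimes> u" "v \<in> carrier G" "y = v \<otimes> v"
    by (auto simp: twoG_def)
  then have "x \<otimes> y = (u \<otimes> v) \<otimes> (u \<otimes> v)" "u \<otimes> v \<in> carrier G"
    by (simp_all add: m_ac)
  then show "x \<otimes> y \<in> twoG G" unfolding twoG_def by blast
qed

lemma tors2_subg: "subgroup (tors2 G) G"
proof (rule subgroupI)
  show "tors2 G \<subseteq> carrier G" by (auto simp: tors2_def)
  show "tors2 G \<noteq> {}" using one_closed unfolding tors2_def by force
next
  fix x assume "x \<in> tors2 G"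
  then show "inv x \<in> tors2 G"
    by (auto simp: tors2_def inv_mult_group[symmetric])
next
  fix x y assume "x \<in> tors2 G" "y \<in> tors2 G"
  then show "x \<otimes> y \<in> tors2 G"
    by (auto simp: tors2_def m_ac)
qed

end

locale cgm = cg +
  fixes m
  assumes gm: "goodbf G (tors2 G) m"
begin

abbreviation "V \<equiv> tors2 G"
abbreviation "W \<equiv> mod2 G"
definition pi :: "'a \<Rightarrow> 'a set" where "pi a = twoG G #> a"

lemma m_facts:
  shows mV: "\<And>x y. x \<in> V \<Longrightarrow> y \<in> V \<Longrightarrow> m x y \<in> V"
    and mdiag: "\<And>x. x \<in> V \<Longrightarrow> m x x = x"
    and ml: "\<And>x y z. x \<in> V \<Longrightarrow> y \<in> V \<Longrightarrow> z \<in> V \<Longrightarrow> m (x \<otimes> y) z = m x z \<otimes> m y z"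
    and mr: "\<And>x y z. x \<in> V \<Longrightarrow> y \<in> V \<Longrightarrow> z \<in> V \<Longrightarrow> m z (x \<otimes> y) = m z x \<otimes> m z y"
  using gm unfolding goodbf_def by blast+

lemma Vc: "x \<in> V \<Longrightarrow> x \<in> carrier G" by (simp add: tors2_def)
lemma Vsq: "x \<in> V \<Longrightarrow> x \<otimes> x = \<one>" by (simp add: tors2_def)
lemma V1: "\<one> \<in> V" by (simp add: tors2_def)
lemma Vm: "x \<in> V \<Longrightarrow> y \<in> V \<Longrightarrow> x \<otimes> y \<in> V" using tors2_subg by (simp add: subgroup.m_closed)

lemma mc: "x \<in> V \<Longrightarrow> y \<in> V \<Longrightarrow> m x y \<in> carrier G" using mV Vc by blast

lemma m1: assumes s: "s \<in> V" shows "m \<one> s = \<one>"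
proof -
  have "m \<one> s = m \<one> s \<otimes> m \<one> s" using ml[OF V1 V1 s] by simp
  then have "m \<one> s \<otimes> \<one> = m \<one> s \<otimes> m \<one> s" using mc[OF V1 s] by simp
  then show ?thesis using mc[OF V1 s] by (metis l_cancel one_closed)
qed

lemma msym: assumes t: "t \<in> V" and s: "s \<in> V" shows "m t s = m s t"
proof -
  have ts: "t \<otimes> s \<in> V" using Vm t s .
  have "t \<otimes> s = m (t \<otimes> s) (t \<otimes> s)" using mdiag[OF ts] by simp
  also have "\<dots> = (m t t \<otimes> m t s) \<otimes> (m s t \<otimes> m s s)"
    using ml[OF t s ts] mr[OF t s t] mr[OF t s s] by simp
  also have "\<dots> = (t \<otimes> s) \<otimes> (m t s \<otimes> m s t)"
    using mdiag[OF t] mdiag[OF s] mc t s Vc by (simp add: m_ac)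
  finally have "(t \<otimes> s) \<otimes> \<one> = (t \<otimes> s) \<otimes> (m t s \<otimes> m s t)" using Vc[OF ts] by simp
  then have e: "m t s \<otimes> m s t = \<one>" using Vc[OF ts] mc[OF t s] mc[OF s t] by (metis l_cancel m_closed one_closed)
  have "m t s = m t s \<otimes> (m s t \<otimes> m s t)" using Vsq[OF mV[OF s t]] mc[OF t s] by simp
  also have "\<dots> = m s t" using e mc[OF t s] mc[OF s t] by (simp add: m_assoc[symmetric])
  finally show ?thesis .
qed

lemma W_comm: "comm_group W" unfolding mod2_def by (rule abelian_FactGroup[OF twoG_sub])

sublocale W: comm_group W by (rule W_comm)

lemma pi_hom: "pi \<in> hom G W"
  unfolding pi_def mod2_def
  by (rule normal.r_coset_hom_Mod) (simp add: normal_iff_subgroup twoG_sub)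

lemma pi_closed: "a \<in> carrier G \<Longrightarrow> pi a \<in> carrier W" using pi_hom by (simp add: hom_in_carrier)
lemma pi_mult: "a \<in> carrier G \<Longrightarrow> b \<in> carrier G \<Longrightarrow> pi (a \<otimes> b) = pi a \<otimes>\<^bsub>W\<^esub> pi b"
  using pi_hom by (simp add: hom_mult)
lemma pi_one: "pi \<one> = \<one>\<^bsub>W\<^esub>"
  using hom_one[OF pi_hom is_group W.is_group] .

lemma W_carrier: "carrier W = pi ` carrier G"
  by (simp add: mod2_def carrier_FactGroup pi_def)

lemma pi_sq: "a \<in> carrier G \<Longrightarrow> pi (a \<otimes> a) = \<one>\<^bsub>W\<^esub>"
proof -
  assume a: "a \<in> carrier G"
  have "a \<otimes> a \<in> twoG G" using a by (auto simp: twoG_def)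
  then have "pi (a \<otimes> a) = twoG G" unfolding pi_def using a twoG_sub by (simp add: coset_join2)
  then show ?thesis by (simp add: mod2_def)
qed

lemma W_sq: "C \<in> carrier W \<Longrightarrow> C \<otimes>\<^bsub>W\<^esub> C = \<one>\<^bsub>W\<^esub>"
  using W_carrier pi_sq pi_mult by (metis imageE)

definition B0 :: "('a set \<times> 'a) monoid" where
  "B0 = \<lparr>carrier = carrier W \<times> V,
         monoid.mult = (\<lambda>p q. (fst p \<otimes>\<^bsub>W\<^esub> fst q \<otimes>\<^bsub>W\<^esub> pi (m (snd p) (snd q)), snd p \<otimes> snd q)),
         one = (\<one>\<^bsub>W\<^esub>, \<one>)\<rparr>"

lemma B0_carrier: "carrier B0 = carrier W \<times> V" by (simp add: B0_def)
lemma B0_mult: "(C,t) \<otimes>\<^bsub>B0\<^esub> (D,s) = (C \<otimes>\<^bsub>W\<^esub> D \<otimes>\<^bsub>W\<^esub> pi (m t s), t \<otimes> s)" by (simp add: B0_def)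
lemma B0_one: "\<one>\<^bsub>B0\<^esub> = (\<one>\<^bsub>W\<^esub>, \<one>)" by (simp add: B0_def)

lemma pim: "t \<in> V \<Longrightarrow> s \<in> V \<Longrightarrow> pi (m t s) \<in> carrier W" using pi_closed mc by blast

lemma B0_comm: "comm_group B0"
proof (rule comm_groupI)
  fix p q assume "p \<in> carrier B0" "q \<in> carrier B0"
  then show "p \<otimes>\<^bsub>B0\<^esub> q \<in> carrier B0"
    by (cases p, cases q) (auto simp: B0_carrier B0_mult pim Vm)
next
  show "\<one>\<^bsub>B0\<^esub> \<in> carrier B0" by (simp add: B0_carrier B0_one V1)
next
  fix p q r assume "p \<in> carrier B0" "q \<in> carrier B0" "r \<in> carrier B0"
  then obtain C t D s E u where pqr: "p = (C,t)" "q = (D,s)" "r = (E,u)" "C \<in> carrier W" "D \<in> carrier W"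
    "E \<in> carrier W" "t \<in> V" "s \<in> V" "u \<in> V" by (auto simp: B0_carrier)
  have "m t s \<otimes> m (t \<otimes> s) u = m s u \<otimes> m t (s \<otimes> u)"
    using pqr ml mr mc by (simp add: m_ac)
  then have k: "pi (m t s) \<otimes>\<^bsub>W\<^esub> pi (m (t \<otimes> s) u) = pi (m s u) \<otimes>\<^bsub>W\<^esub> pi (m t (s \<otimes> u))"
    using pqr mc Vm by (simp flip: pi_mult)
  have "C \<otimes>\<^bsub>W\<^esub> D \<otimes>\<^bsub>W\<^esub> pi (m t s) \<otimes>\<^bsub>W\<^esub> E \<otimes>\<^bsub>W\<^esub> pi (m (t \<otimes> s) u) =
        C \<otimes>\<^bsub>W\<^esub> D \<otimes>\<^bsub>W\<^esub> E \<otimes>\<^bsub>W\<^esub> (pi (m t s) \<otimes>\<^bsub>W\<^esub> pi (m (t \<otimes> s) u))"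
    using pqr pim Vm by (simp add: W.m_ac)
  also have "\<dots> = C \<otimes>\<^bsub>W\<^esub> D \<otimes>\<^bsub>W\<^esub> E \<otimes>\<^bsub>W\<^esub> (pi (m s u) \<otimes>\<^bsub>W\<^esub> pi (m t (s \<otimes> u)))" by (simp only: k)
  also have "\<dots> = C \<otimes>\<^bsub>W\<^esub> (D \<otimes>\<^bsub>W\<^esub> E \<otimes>\<^bsub>W\<^esub> pi (m s u)) \<otimes>\<^bsub>W\<^esub> pi (m t (s \<otimes> u))"
    using pqr pim Vm by (simp add: W.m_ac)
  finally show "p \<otimes>\<^bsub>B0\<^esub> q \<otimes>\<^bsub>B0\<^esub> r = p \<otimes>\<^bsub>B0\<^esub> (q \<otimes>\<^bsub>B0\<^esub> r)"
    using pqr by (simp add: B0_mult m_assoc Vc)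
next
  fix p q assume "p \<in> carrier B0" "q \<in> carrier B0"
  then obtain C t D s where pq: "p = (C,t)" "q = (D,s)" "C \<in> carrier W" "D \<in> carrier W"
    "t \<in> V" "s \<in> V" by (auto simp: B0_carrier)
  then show "p \<otimes>\<^bsub>B0\<^esub> q = q \<otimes>\<^bsub>B0\<^esub> p"
    by (simp add: B0_mult msym W.m_comm m_comm Vc)
next
  fix p assume "p \<in> carrier B0"
  then obtain C t where p: "p = (C,t)" "C \<in> carrier W" "t \<in> V" by (auto simp: B0_carrier)
  then show "\<one>\<^bsub>B0\<^esub> \<otimes>\<^bsub>B0\<^esub> p = p"
    by (simp add: B0_one B0_mult m1 pi_one Vc)
next
  fix p assume "p \<in> carrier B0"
  then obtain C t where p: "p = (C,t)" "C \<in> carrier W" "t \<in> V" by (auto simp: B0_carrier)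
  define y where "y = (inv\<^bsub>W\<^esub> (C \<otimes>\<^bsub>W\<^esub> pi t), t)"
  have yc: "y \<in> carrier B0" using p pi_closed Vc by (simp add: y_def B0_carrier)
  have "y \<otimes>\<^bsub>B0\<^esub> p = (inv\<^bsub>W\<^esub> (C \<otimes>\<^bsub>W\<^esub> pi t) \<otimes>\<^bsub>W\<^esub> (C \<otimes>\<^bsub>W\<^esub> pi t), t \<otimes> t)"
    using p pi_closed Vc by (simp add: y_def B0_mult mdiag W.m_assoc)
  also have "\<dots> = \<one>\<^bsub>B0\<^esub>" using p pi_closed Vc Vsq by (simp add: B0_one)
  finally show "\<exists>y\<in>carrier B0. y \<otimes>\<^bsub>B0\<^esub> p = \<one>\<^bsub>B0\<^esub>" using yc by blast
qed

end

context cgm begin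

definition e :: "'a set \<times> 'a \<Rightarrow> 'a \<times> 'a" where "e p = ((SOME a. a \<in> fst p), snd p)"

lemma some_W: assumes C: "C \<in> carrier W"
  shows "(SOME a. a \<in> C) \<in> carrier G" "pi (SOME a. a \<in> C) = C"
proof -
  obtain c where c: "c \<in> carrier G" "C = pi c" using C W_carrier by auto
  have "c \<in> C" using c twoG_sub by (simp add: pi_def rcos_self)
  then have s: "(SOME a. a \<in> C) \<in> C" by (rule someI)
  then have "(SOME a. a \<in> C) \<in> twoG G #> c" using c by (simp add: pi_def)
  moreover have "twoG G #> c \<subseteq> carrier G" using c twoG_sub by (simp add: r_coset_subset_G subgroup.subset)
  ultimately show sc: "(SOME a. a \<in> C) \<in> carrier G" by blast
  show "pi (SOME a. a \<in> C) = C"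
    using repr_independence[of "SOME a. a \<in> C" "twoG G" c] s c twoG_sub by (simp add: pi_def)
qed

lemma e_inj: "inj_on e (carrier B0)"
proof (rule inj_onI)
  fix p q assume "p \<in> carrier B0" "q \<in> carrier B0" and eq: "e p = e q"
  then obtain C t D s where pq: "p = (C,t)" "q = (D,s)" "C \<in> carrier W" "D \<in> carrier W"
    by (auto simp: B0_carrier)
  have "(SOME a. a \<in> C) = (SOME a. a \<in> D)" "t = s" using eq pq by (simp_all add: e_def)
  then have "C = D" using some_W(2)[OF pq(3)] some_W(2)[OF pq(4)] by metis
  then show "p = q" using pq \<open>t = s\<close> by simp
qed

definition Bt where "Bt = transp e B0"
definition phi where "phi a = e (pi a, \<one>)"
definition psi where "psi b = snd (inv_into (carrier B0) e b)"
definition Md :: "('a, 'a \<times> 'a) md" where "Md = (G, Bt, phi, psi)"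

lemma Bt_comm: "comm_group Bt" unfolding Bt_def by (rule transp(1)[OF B0_comm e_inj])
lemma Bt_carrier: "carrier Bt = e ` carrier B0" by (simp add: Bt_def transp_carrier)
lemma Bt_mult: "p \<in> carrier B0 \<Longrightarrow> q \<in> carrier B0 \<Longrightarrow> e p \<otimes>\<^bsub>Bt\<^esub> e q = e (p \<otimes>\<^bsub>B0\<^esub> q)"
  unfolding Bt_def by (rule transp_mult[OF e_inj])
lemma ie: "p \<in> carrier B0 \<Longrightarrow> inv_into (carrier B0) e (e p) = p" using e_inj by simp
lemma psi_e: "p \<in> carrier B0 \<Longrightarrow> psi (e p) = snd p" by (simp add: psi_def ie)

lemma Md_exact: "exact_md Md"
proof -
  have A: "md_A Md = G" "md_B Md = Bt" "md_phi Md = phi" "md_psi Md = psi"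
    by (simp_all add: Md_def md_A_def md_B_def md_phi_def md_psi_def)
  have pc: "(pi a, \<one>) \<in> carrier B0" if "a \<in> carrier G" for a
    using that pi_closed V1 by (simp add: B0_carrier)
  have phi_hom: "phi \<in> hom G Bt"
  proof (rule homI)
    fix a assume "a \<in> carrier G" then show "phi a \<in> carrier Bt" using pc by (simp add: phi_def Bt_carrier)
  next
    fix a b assume ab: "a \<in> carrier G" "b \<in> carrier G"
    then show "phi (a \<otimes> b) = phi a \<otimes>\<^bsub>Bt\<^esub> phi b"
      using pc by (simp add: phi_def Bt_mult B0_mult m1 V1 pi_one pi_mult pi_closed)
  qed
  have psi_hom: "psi \<in> hom Bt G"
  proof (rule homI)
    fix x assume "x \<in> carrier Bt" then show "psi x \<in> carrier G"
      by (auto simp: Bt_carrier psi_e B0_carrier Vc)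
  next
    fix x y assume "x \<in> carrier Bt" "y \<in> carrier Bt"
    then obtain p q where pq: "p \<in> carrier B0" "q \<in> carrier B0" "x = e p" "y = e q" by (auto simp: Bt_carrier)
    have "p \<otimes>\<^bsub>B0\<^esub> q \<in> carrier B0" using B0_comm pq by (simp add: comm_group.axioms(2) group.is_monoid monoid.m_closed)
    then show "psi (x \<otimes>\<^bsub>Bt\<^esub> y) = psi x \<otimes> psi y"
      using pq by (cases p, cases q) (simp add: Bt_mult psi_e B0_mult)
  qed
  have psiphi: "psi (phi a) = \<one>" if "a \<in> carrier G" for a using pc[OF that] by (simp add: phi_def psi_e)
  have phipsi: "phi (psi b) = b \<otimes>\<^bsub>Bt\<^esub> b" if hb: "b \<in> carrier Bt" for b
  proof -
    obtain C t where p: "(C,t) \<in> carrier B0" "b = e (C,t)" using hb by (auto simp: Bt_carrier)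
    have Ct: "C \<in> carrier W" "t \<in> V" using p by (auto simp: B0_carrier)
    have "b \<otimes>\<^bsub>Bt\<^esub> b = e (C \<otimes>\<^bsub>W\<^esub> C \<otimes>\<^bsub>W\<^esub> pi t, \<one>)"
      using p Ct by (simp add: Bt_mult B0_mult mdiag Vsq)
    also have "\<dots> = e (pi t, \<one>)" using Ct W_sq pi_closed Vc by simp
    finally show ?thesis using p by (simp add: psi_e phi_def)
  qed
  have md: "moore_diagram Md"
    unfolding moore_diagram_def A using cg Bt_comm phi_hom psi_hom psiphi phipsi by simp
  have phibar: "md_phibar Md C = e (C, \<one>)" if "C \<in> carrier W" for C
    using that some_W[OF that] by (simp add: md_phibar_def A phi_def)
  have inj: "inj_on (md_phibar Md) (carrier (mod2 (md_A Md)))"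
  proof (rule inj_onI)
    fix C D assume CD: "C \<in> carrier (mod2 (md_A Md))" "D \<in> carrier (mod2 (md_A Md))"
      "md_phibar Md C = md_phibar Md D"
    then have "e (C, \<one>) = e (D, \<one>)" using phibar A by simp
    moreover have "(C,\<one>) \<in> carrier B0" "(D,\<one>) \<in> carrier B0" using CD A V1 by (auto simp: B0_carrier)
    ultimately show "C = D" using e_inj by (auto dest: inj_onD)
  qed
  have img: "md_phibar Md ` carrier (mod2 (md_A Md)) = kernel (md_B Md) (md_A Md) (md_psi Md)"
  proof
    show "md_phibar Md ` carrier (mod2 (md_A Md)) \<subseteq> kernel (md_B Md) (md_A Md) (md_psi Md)"
    proof
      fix x assume "x \<in> md_phibar Md ` carrier (mod2 (md_A Md))"
      then obtain C where C: "C \<in> carrier W" "x = e (C, \<one>)" using phibar A by auto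
      have "(C,\<one>) \<in> carrier B0" using C V1 by (simp add: B0_carrier)
      then show "x \<in> kernel (md_B Md) (md_A Md) (md_psi Md)"
        using C by (simp add: kernel_def A Bt_carrier psi_e)
    qed
  next
    show "kernel (md_B Md) (md_A Md) (md_psi Md) \<subseteq> md_phibar Md ` carrier (mod2 (md_A Md))"
    proof
      fix x assume "x \<in> kernel (md_B Md) (md_A Md) (md_psi Md)"
      then have x: "x \<in> carrier Bt" "psi x = \<one>" by (simp_all add: kernel_def A)
      then obtain C t where p: "(C,t) \<in> carrier B0" "x = e (C,t)" by (auto simp: Bt_carrier)
      have "t = \<one>" using x p by (simp add: psi_e)
      then have "x = md_phibar Md C" "C \<in> carrier W" using p phibar by (auto simp: B0_carrier)
      then show "x \<in> md_phibar Md ` carrier (mod2 (md_A Md))" using A by simp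
    qed
  qed
  have psiimg: "md_psi Md ` carrier (md_B Md) = tors2 (md_A Md)"
  proof
    show "md_psi Md ` carrier (md_B Md) \<subseteq> tors2 (md_A Md)"
      by (auto simp: A Bt_carrier psi_e B0_carrier)
  next
    show "tors2 (md_A Md) \<subseteq> md_psi Md ` carrier (md_B Md)"
    proof
      fix t assume t: "t \<in> tors2 (md_A Md)"
      then have "(\<one>\<^bsub>W\<^esub>, t) \<in> carrier B0" using A by (simp add: B0_carrier)
      moreover then have "psi (e (\<one>\<^bsub>W\<^esub>, t)) = t" by (simp add: psi_e)
      ultimately show "t \<in> md_psi Md ` carrier (md_B Md)" unfolding A Bt_carrier by force
    qed
  qed
  show ?thesis unfolding exact_md_def using md inj img psiimg by blast
qed

lemma Md_A: "md_A Md = G" by (simp add: Md_def md_A_def)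

end

lemma ess_surj:
  fixes G :: "'i monoid"
  assumes "comm_group G"
  shows "\<exists>M::('i, 'i \<times> 'i) md. exact_md M \<and> md_A M \<cong> G"
proof -
  interpret cg G by (rule cg.intro[OF assms])
  obtain m where "goodbf G (tors2 G) m" using exists_bf by blast
  then interpret cgm G m by (intro cgm.intro cgm_axioms.intro cg_axioms)
  show ?thesis using Md_exact Md_A by (metis iso_refl)
qed

theorem corollary3p20:
  shows "
   \<comment> \<open>alpha is full\<close>
   (\<forall>(M::('a,'b) md) (M'::('c,'d) md). exact_md M \<and> exact_md M' \<longrightarrow>
      (\<forall>f\<in>hom_ext (md_A M) (md_A M'). \<exists>g. (f, g) \<in> emd_hom M M'))
 \<and> \<comment> \<open>alpha is essentially surjective\<close>
   (\<forall>G::'i monoid. comm_group G \<longrightarrow>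
      (\<exists>M::('i, 'i \<times> 'i) md. exact_md M \<and> md_A M \<cong> G))
 \<and> \<comment> \<open>alpha reflects isomorphisms\<close>
   (\<forall>(M::('a,'b) md) (M'::('c,'d) md) p. exact_md M \<and> exact_md M' \<and> p \<in> emd_hom M M' \<and>
      md_alpha p \<in> iso (md_A M) (md_A M') \<longrightarrow>
      (\<exists>q\<in>emd_hom M' M. emd_comp M q p = emd_id M \<and> emd_comp M' p q = emd_id M'))
 \<and> \<comment> \<open>short exact sequence of abelian groups\<close>
   (\<forall>(M::('a,'b) md) (M'::('c,'d) md). exact_md M \<and> exact_md M' \<longrightarrow>
      comm_group (hom_group (tors2_grp (md_A M)) (mod2 (md_A M'))) \<and>
      comm_group (emd_group M M') \<and>
      comm_group (hom_group (md_A M) (md_A M')) \<and>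
      emd_iota M M' \<in> hom (hom_group (tors2_grp (md_A M)) (mod2 (md_A M'))) (emd_group M M') \<and>
      inj_on (emd_iota M M') (carrier (hom_group (tors2_grp (md_A M)) (mod2 (md_A M')))) \<and>
      md_alpha \<in> hom (emd_group M M') (hom_group (md_A M) (md_A M')) \<and>
      emd_iota M M' ` carrier (hom_group (tors2_grp (md_A M)) (mod2 (md_A M'))) =
        kernel (emd_group M M') (hom_group (md_A M) (md_A M')) md_alpha \<and>
      md_alpha ` carrier (emd_group M M') = carrier (hom_group (md_A M) (md_A M')))
 \<and> \<comment> \<open>naturality in M and M'\<close>
   (\<forall>(N::('e,'f) md) (M::('a,'b) md) (M'::('c,'d) md) (N'::('g,'h) md) u v u' v' h.
      exact_md N \<and> exact_md M \<and> exact_md M' \<and> exact_md N' \<and>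
      (u, v) \<in> emd_hom N M \<and> (u', v') \<in> emd_hom M' N' \<and>
      h \<in> carrier (hom_group (tors2_grp (md_A M)) (mod2 (md_A M'))) \<longrightarrow>
      emd_comp N (u', v') (emd_comp N (emd_iota M M' h) (u, v)) =
        emd_iota N N' (hom2_map (md_A N) u (md_A M') (md_A N') u' h) \<and>
      (\<forall>p\<in>emd_hom M M'. md_alpha (emd_comp N (u', v') (emd_comp N p (u, v))) =
        compose (carrier (md_A N)) u' (compose (carrier (md_A N)) (md_alpha p) u)))"
  proof (intro conjI allI impI ballI)
  fix M :: "('a,'b) md" and M' :: "('c,'d) md" and f
  assume ex: "exact_md M \<and> exact_md M'" and f: "f \<in> hom_ext (md_A M) (md_A M')"
  interpret xmd2 M M' using ex by (intro xmd2.intro xmd.intro) auto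
  obtain g where "g \<in> hom_ext M.B M'.B" "\<forall>a\<in>carrier M.A. g (M.phi a) = M'.phi (f a)"
     "\<forall>b\<in>carrier M.B. f (M.psi b) = M'.psi (g b)"
    using full[of f] f by (auto simp: hom_ext_def)
  then show "\<exists>g. (f, g) \<in> emd_hom M M'" using f by (auto simp: emd_hom_def)
next
  fix G :: "'i monoid" assume "comm_group G"
  then show "\<exists>M::('i, 'i \<times> 'i) md. exact_md M \<and> md_A M \<cong> G" by (rule ess_surj)
next
  fix M :: "('a,'b) md" and M' :: "('c,'d) md" and p
  assume h: "exact_md M \<and> exact_md M' \<and> p \<in> emd_hom M M' \<and> md_alpha p \<in> iso (md_A M) (md_A M')"
  interpret xmd2 M M' using h by (intro xmd2.intro xmd.intro) auto
  obtain f g where p: "p = (f,g)" by (cases p)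
  show "\<exists>q\<in>emd_hom M' M. emd_comp M q p = emd_id M \<and> emd_comp M' p q = emd_id M'"
    using reflect_iso[of f g] h p by (simp add: md_alpha_def)
next
  fix M :: "('a,'b) md" and M' :: "('c,'d) md"
  assume ex: "exact_md M \<and> exact_md M'"
  interpret xmd2 M M' using ex by (intro xmd2.intro xmd.intro) auto
  show "comm_group (hom_group (tors2_grp (md_A M)) (mod2 (md_A M')))" by (rule comm_hom2)
  show "comm_group (emd_group M M')" by (rule comm_emd)
  show "comm_group (hom_group (md_A M) (md_A M'))" by (rule comm_homA)
  show "emd_iota M M' \<in> hom (hom_group (tors2_grp (md_A M)) (mod2 (md_A M'))) (emd_group M M')" by (rule iota_hom)
  show "inj_on (emd_iota M M') (carrier (hom_group (tors2_grp (md_A M)) (mod2 (md_A M'))))" by (rule iota_inj)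
  show "md_alpha \<in> hom (emd_group M M') (hom_group (md_A M) (md_A M'))" by (rule alpha_hom)
  show "emd_iota M M' ` carrier (hom_group (tors2_grp (md_A M)) (mod2 (md_A M'))) =
        kernel (emd_group M M') (hom_group (md_A M) (md_A M')) md_alpha" by (rule iota_kernel)
  show "md_alpha ` carrier (emd_group M M') = carrier (hom_group (md_A M) (md_A M'))" by (rule alpha_image)
next
  fix N :: "('e,'f) md" and M :: "('a,'b) md" and M' :: "('c,'d) md" and N' :: "('g,'h) md" and u v u' v' h
  assume H: "exact_md N \<and> exact_md M \<and> exact_md M' \<and> exact_md N' \<and>
      (u, v) \<in> emd_hom N M \<and> (u', v') \<in> emd_hom M' N' \<and>
      h \<in> carrier (hom_group (tors2_grp (md_A M)) (mod2 (md_A M')))"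
  then show "emd_comp N (u', v') (emd_comp N (emd_iota M M' h) (u, v)) =
        emd_iota N N' (hom2_map (md_A N) u (md_A M') (md_A N') u' h)"
    using naturality[of N M M' N' u v u' v' h] by blast
  fix p
  show "md_alpha (emd_comp N (u', v') (emd_comp N p (u, v))) =
        compose (carrier (md_A N)) u' (compose (carrier (md_A N)) (md_alpha p) u)"
    by (rule naturality2)
qed

end
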